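(* Let $A\in\mathcal R$ and let $\Gamma_1,\Gamma_2$ be symmetric $d\times d$ matrices with $\Gamma_1\succeq\Gamma_2\succ0$. Then for every $x\in\mathbb R^d$, $$\sum_{k,i,j=1}^d\big|\partial_{kij}\varphi_A(x,\Gamma_1^{1/2})\big|\le\sup_{y\in\mathbb R^d}\sum_{k,i,j=1}^d\big|\partial_{kij}\varphi_A(y,\Gamma_2^{1/2})\big|.$$
   Context: $\mathcal R$ is the class of hyper-rectangles $\prod_{j=1}^d(a_j,b_j]$ in $\mathbb R^d$, $-\infty\le a_j\le b_j\le\infty$. For a positive semidefinite matrix $\Gamma$, $\varphi_A(x,\Gamma^{1/2})=\mathsf P(x+\Gamma^{1/2}\eta\in A)$ with $\eta\sim\mathcal N(0,I_d)$; $\partial_{kij}$ denotes third-order partial derivatives in $x$. *)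

theory Defs
  imports "HOL-Analysis.Analysis" "HOL-Probability.Probability"
begin

text \<open>Hyper-rectangles prod_j (a_j, b_j] with extended-real endpoints, a_j \<le> b_j.\<close>
definition hyperrects :: "(real ^ 'n) set set" where
  "hyperrects = {A. \<exists>a b :: 'n \<Rightarrow> ereal. (\<forall>j. a j \<le> b j) \<and>
      A = {x. \<forall>j. a j < ereal (x $ j) \<and> ereal (x $ j) \<le> b j}}"

definition sym_mat :: "real ^ 'n ^ 'n \<Rightarrow> bool" where
  "sym_mat M \<longleftrightarrow> transpose M = M"

definition psd_mat :: "real ^ 'n ^ 'n \<Rightarrow> bool" where
  "psd_mat M \<longleftrightarrow> sym_mat M \<and> (\<forall>v. 0 \<le> v \<bullet> (M *v v))"

definition pd_mat :: "real ^ 'n ^ 'n \<Rightarrow> bool" where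
  "pd_mat M \<longleftrightarrow> sym_mat M \<and> (\<forall>v. v \<noteq> 0 \<longrightarrow> 0 < v \<bullet> (M *v v))"

text \<open>Loewner order: M1 \<succeq> M2 iff M1 - M2 is positive semidefinite.\<close>
definition loewner_ge :: "real ^ 'n ^ 'n \<Rightarrow> real ^ 'n ^ 'n \<Rightarrow> bool" where
  "loewner_ge M1 M2 \<longleftrightarrow> psd_mat (M1 - M2)"

text \<open>The (unique) symmetric positive semidefinite square root.\<close>
definition psd_sqrt :: "real ^ 'n ^ 'n \<Rightarrow> real ^ 'n ^ 'n" where
  "psd_sqrt M = (THE S. psd_mat S \<and> S ** S = M)"

text \<open>Standard Gaussian measure N(0, I_d) on real^'n.\<close>
definition std_gauss :: "(real ^ 'n) measure" where
  "std_gauss = density lborel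
     (\<lambda>\<eta>. ennreal ((2 * pi) powr (- real CARD('n) / 2) * exp (- (norm \<eta>)\<^sup>2 / 2)))"

text \<open>phi_A(x, S) = P(x + S eta \<in> A), eta ~ N(0, I_d).\<close>
definition phi :: "(real ^ 'n) set \<Rightarrow> real ^ 'n \<Rightarrow> real ^ 'n ^ 'n \<Rightarrow> real" where
  "phi A x S = measure std_gauss {\<eta>. x + S *v \<eta> \<in> A}"

text \<open>Partial derivative in the i-th coordinate direction.\<close>
definition pderiv_coord :: "'n \<Rightarrow> (real ^ 'n \<Rightarrow> real) \<Rightarrow> real ^ 'n \<Rightarrow> real" where
  "pderiv_coord i f x = deriv (\<lambda>t. f (x + t *\<^sub>R axis i 1)) 0"

text \<open>Sum over k,i,j of |\<partial>_kij phi_A(x, S)|.\<close>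
definition third_deriv_sum :: "(real ^ 'n) set \<Rightarrow> real ^ 'n ^ 'n \<Rightarrow> real ^ 'n \<Rightarrow> real" where
  "third_deriv_sum A S x =
     (\<Sum>k\<in>UNIV. \<Sum>i\<in>UNIV. \<Sum>j\<in>UNIV.
        \<bar>pderiv_coord k (pderiv_coord i (pderiv_coord j (\<lambda>y. phi A y S))) x\<bar>)"

end

theory Submission
  imports Defs
begin

lemma det_shear_one:
  fixes m n :: "'n::finite"
  assumes "m \<noteq> n"
  shows "det (matrix (\<lambda>v::real^'n. \<chi> i. if i = m then v $ m + v $ n else v $ i)) = 1"
proof -
  have "matrix (\<lambda>v::real^'n. \<chi> i. if i = m then v $ m + v $ n else v $ i)
      = (\<chi> k. if k = m then row m (mat 1) + 1 *s row n (mat 1) else row k (mat 1 :: real^'n^'n))"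
    by (auto simp: matrix_def vec_eq_iff row_def mat_def axis_def)
  also have "det \<dots> = det (mat 1 :: real^'n^'n)"
    by (rule det_row_operation[OF assms])
  finally show ?thesis by simp
qed

proposition
 fixes f :: "real^'n::finite \<Rightarrow> real^'n"
  assumes "linear f" "S \<in> lmeasurable"
  shows my_measurable_linear_image: "(f ` S) \<in> lmeasurable"
    and my_measure_linear_image: "measure lebesgue (f ` S) = \<bar>det (matrix f)\<bar> * measure lebesgue S" (is "?Q f S")
proof -
  have "\<forall>S \<in> lmeasurable. (f ` S) \<in> lmeasurable \<and> ?Q f S"
  proof (rule induct_linear_elementary [OF \<open>linear f\<close>]; intro ballI)
    fix f g and S :: "(real,'n) vec set"
    assume "linear f" and "linear g"
      and f [rule_format]: "\<forall>S \<in> lmeasurable. f ` S \<in> lmeasurable \<and> ?Q f S"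
      and g [rule_format]: "\<forall>S \<in> lmeasurable. g ` S \<in> lmeasurable \<and> ?Q g S"
      and S: "S \<in> lmeasurable"
    then have gS: "g ` S \<in> lmeasurable"
      by blast
    show "(f \<circ> g) ` S \<in> lmeasurable \<and> ?Q (f \<circ> g) S"
      using f [OF gS] g [OF S] matrix_compose [OF \<open>linear g\<close> \<open>linear f\<close>]
      by (simp add: o_def image_comp abs_mult det_mul)
  next
    fix f :: "real^'n::_ \<Rightarrow> real^'n::_" and i and S :: "(real^'n::_) set"
    assume "linear f" and 0: "\<And>x. f x $ i = 0" and "S \<in> lmeasurable"
    then have "\<not> inj f"
      by (metis (full_types) linear_injective_imp_surjective one_neq_zero surjE vec_component)
    have detf: "det (matrix f) = 0"
      using \<open>\<not> inj f\<close> det_nz_iff_inj[OF \<open>linear f\<close>] by blast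
    show "f ` S \<in> lmeasurable \<and> ?Q f S"
    proof
      show "f ` S \<in> lmeasurable"
        using lmeasurable_iff_indicator_has_integral \<open>linear f\<close> \<open>\<not> inj f\<close> negligible_UNIV negligible_linear_singular_image by blast
      have "measure lebesgue (f ` S) = 0"
        by (meson \<open>\<not> inj f\<close> \<open>linear f\<close> negligible_imp_measure0 negligible_linear_singular_image)
      also have "\<dots> = \<bar>det (matrix f)\<bar> * measure lebesgue S"
        by (simp add: detf)
      finally show "?Q f S" .
    qed
  next
    fix c and S :: "(real^'n::_) set"
    assume "S \<in> lmeasurable"
    show "(\<lambda>a. \<chi> i. c i * a $ i) ` S \<in> lmeasurable \<and> ?Q (\<lambda>a. \<chi> i. c i * a $ i) S"
    proof
      show "(\<lambda>a. \<chi> i. c i * a $ i) ` S \<in> lmeasurable"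
        by (simp add: \<open>S \<in> lmeasurable\<close> measurable_stretch)
      show "?Q (\<lambda>a. \<chi> i. c i * a $ i) S"
        by (simp add: measure_stretch [OF \<open>S \<in> lmeasurable\<close>, of c] axis_def matrix_def det_diagonal)
    qed
  next
    fix m :: "'n" and n :: "'n" and S :: "(real, 'n) vec set"
    assume "m \<noteq> n" and "S \<in> lmeasurable"
    let ?h = "\<lambda>v::(real, 'n) vec. \<chi> i. v $ Transposition.transpose m n i"
    have lin: "linear ?h"
      by (rule linearI) (simp_all add: plus_vec_def scaleR_vec_def)
    have meq: "measure lebesgue ((\<lambda>v::(real, 'n) vec. \<chi> i. v $ Transposition.transpose m n i) ` cbox a b)
             = measure lebesgue (cbox a b)" for a b
    proof (cases "cbox a b = {}")
      case True then show ?thesis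
        by simp
    next
      case False
      then have him: "?h ` (cbox a b) \<noteq> {}"
        by blast
      have eq: "?h ` (cbox a b) = cbox (?h a) (?h b)"
        by (auto simp: image_iff lambda_swap_Galois mem_box_cart) (metis transpose_involutory)+
      show ?thesis
        using him prod.permute [OF permutes_swap_id, where S=UNIV and g="\<lambda>i. (b - a)$i", symmetric]
        by (simp add: eq content_cbox_cart False)
    qed
    have "(\<chi> i j. if Transposition.transpose m n i = j then 1 else 0) = (\<chi> i j. if j = Transposition.transpose m n i then 1 else (0::real))"
      by (auto intro!: Cart_lambda_cong)
    then have "matrix ?h = transpose(\<chi> i j. mat 1 $ i $ Transposition.transpose m n j)"
      by (auto simp: matrix_eq transpose_def axis_def mat_def matrix_def)
    then have 1: "\<bar>det (matrix ?h)\<bar> = 1"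
      by (simp add: det_permute_columns permutes_swap_id sign_swap_id abs_mult)
    show "?h ` S \<in> lmeasurable \<and> ?Q ?h S"
      using measure_linear_sufficient [OF lin \<open>S \<in> lmeasurable\<close>] meq 1 by force
  next
    fix m n :: "'n" and S :: "(real, 'n) vec set"
    assume "m \<noteq> n" and "S \<in> lmeasurable"
    let ?h = "\<lambda>v::(real, 'n) vec. \<chi> i. if i = m then v $ m + v $ n else v $ i"
    have lin: "linear ?h"
      by (rule linearI) (auto simp: algebra_simps plus_vec_def scaleR_vec_def vec_eq_iff)
    have 1: "det(matrix ?h) = 1"
      using det_shear_one[OF \<open>m \<noteq> n\<close>] .
    have meq: "measure lebesgue (?h ` (cbox a b)) = measure lebesgue (cbox a b)" for a b
    proof (cases "cbox a b = {}")
      case True then show ?thesis by simp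
    next
      case False
      then have ne: "(+) (\<chi> i. if i = n then - a $ n else 0) ` cbox a b \<noteq> {}"
        by auto
      let ?v = "\<chi> i. if i = n then - a $ n else 0"
      have "?h ` cbox a b
            = (+) (\<chi> i. if i = m \<or> i = n then a $ n else 0) ` ?h ` (+) ?v ` (cbox a b)"
        using \<open>m \<noteq> n\<close> unfolding image_comp o_def by (force simp: vec_eq_iff)
      then have "measure lebesgue (?h ` (cbox a b))
               = measure lebesgue ((\<lambda>v. \<chi> i. if i = m then v $ m + v $ n else v $ i) `
                                   (+) ?v ` cbox a b)"
        by (rule ssubst) (rule measure_translation)
      also have "\<dots> = measure lebesgue ((\<lambda>v. \<chi> i. if i = m then v $ m + v $ n else v $ i) ` cbox (?v +a) (?v + b))"
        by (metis (no_types, lifting) cbox_translation)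
      also have "\<dots> = measure lebesgue ((+) ?v ` cbox a b)"
        apply (subst measure_shear_interval)
        using \<open>m \<noteq> n\<close> ne apply auto
        apply (simp add: cbox_translation)
        by (metis cbox_borel cbox_translation measure_completion sets_lborel)
      also have "\<dots> = measure lebesgue (cbox a b)"
        by (rule measure_translation)
        finally show ?thesis .
      qed
    show "?h ` S \<in> lmeasurable \<and> ?Q ?h S"
      using measure_linear_sufficient [OF lin \<open>S \<in> lmeasurable\<close>] meq 1 by force
  qed
  with assms show "(f ` S) \<in> lmeasurable" "?Q f S"
    by metis+
qed

lemma inv_det_ne0:
  fixes A :: "real^'n^'n"
  assumes "det A \<noteq> 0"
  shows "invertible A" "A ** matrix_inv A = mat 1" "matrix_inv A ** A = mat 1"
    "det (matrix_inv A) = 1 / det A"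
proof -
  show inv: "invertible A" using assms invertible_det_nz by blast
  obtain B where "A ** B = mat 1 \<and> B ** A = mat 1" using inv unfolding invertible_def by blast
  then have "A ** matrix_inv A = mat 1 \<and> matrix_inv A ** A = mat 1"
    unfolding matrix_inv_def by (rule someI)
  then show "A ** matrix_inv A = mat 1" "matrix_inv A ** A = mat 1" by auto
  then have "det A * det (matrix_inv A) = 1" by (metis det_I det_mul)
  then show "det (matrix_inv A) = 1 / det A" using assms by (simp add: field_simps)
qed

lemma matrix_mult_measurable[measurable]:
  fixes A :: "real^'n^'m"
  shows "((*v) A) \<in> borel \<rightarrow>\<^sub>M borel"
  by (intro borel_measurable_continuous_onI linear_continuous_on) (simp add: matrix_vector_mul_linear linear_linear)

lemma lborel_matrix_affine:
  fixes A :: "real^'n^'n"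
  assumes dA: "det A \<noteq> 0"
  shows "lborel = density (distr lborel borel ((*v) A)) (\<lambda>_. ennreal \<bar>det A\<bar>)"
proof (rule lborel_eqI)
  fix l u :: "real^'n" assume le: "\<And>b. b \<in> Basis \<Longrightarrow> l \<bullet> b \<le> u \<bullet> b"
  let ?B = "matrix_inv A"
  have AB: "A ** ?B = mat 1" "?B ** A = mat 1" and dB: "det ?B = 1 / det A"
    using inv_det_ne0[OF dA] by auto
  have pre: "(*v) A -` box l u = (*v) ?B ` box l u"
    apply (auto simp: matrix_vector_mul_assoc AB)
    apply (rule image_eqI[of _ _ "A *v _"])
     apply (auto simp: matrix_vector_mul_assoc AB)
    done
  have lin: "linear ((*v) ?B)" by (simp add: matrix_vector_mul_linear)
  have lm: "box l u \<in> lmeasurable" by simp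
  have bor: "(*v) A -` box l u \<in> sets borel"
    using measurable_sets_borel[OF matrix_mult_measurable[of A], of "box l u"] by simp
  have "emeasure lborel ((*v) A -` box l u) = emeasure lebesgue ((*v) A -` box l u)"
    using bor by (simp add: emeasure_completion)
  also have "\<dots> = emeasure lebesgue ((*v) ?B ` box l u)"
    by (simp only: pre)
  also have "\<dots> = ennreal (measure lebesgue ((*v) ?B ` box l u))"
    by (rule emeasure_eq_measure2[OF my_measurable_linear_image[OF lin lm]])
  also have "\<dots> = ennreal (\<bar>det ?B\<bar> * measure lebesgue (box l u))"
    using my_measure_linear_image[OF lin lm] unfolding matrix_of_matrix_vector_mul by simp
  finally have e: "emeasure lborel ((*v) A -` box l u) = ennreal (\<bar>det ?B\<bar> * measure lebesgue (box l u))" .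
  have "emeasure (density (distr lborel borel ((*v) A)) (\<lambda>_. ennreal \<bar>det A\<bar>)) (box l u)
      = ennreal \<bar>det A\<bar> * emeasure lborel ((*v) A -` box l u)"
    by (simp add: emeasure_density emeasure_distr bor nn_integral_cmult_indicator)
  also have "\<dots> = ennreal (measure lebesgue (box l u))"
  proof -
    have "\<bar>det A\<bar> * (\<bar>det ?B\<bar> * measure lebesgue (box l u)) = measure lebesgue (box l u)"
      using dA by (simp add: dB abs_mult)
    then show ?thesis
      by (simp only: e ennreal_mult'[symmetric] abs_ge_zero)
  qed
  also have "\<dots> = (\<Prod>b\<in>Basis. (u - l) \<bullet> b)"
    using le by (simp add: emeasure_lborel_box_eq measure_def)
  finally show "emeasure (density (distr lborel borel ((*v) A)) (\<lambda>_. ennreal \<bar>det A\<bar>)) (box l u) = (\<Prod>b\<in>Basis. (u - l) \<bullet> b)" .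
qed simp

lemma nn_integral_matrix:
  fixes A :: "real^'n^'n"
  assumes dA: "det A \<noteq> 0" and f[measurable]: "f \<in> borel_measurable borel"
  shows "(\<integral>\<^sup>+x. f x \<partial>lborel) = ennreal \<bar>det A\<bar> * (\<integral>\<^sup>+x. f (A *v x) \<partial>lborel)"
  by (subst lborel_matrix_affine[OF dA])
     (simp add: nn_integral_density nn_integral_distr nn_integral_cmult)

lemma nn_integral_translate:
  fixes t :: "'a::euclidean_space"
  assumes f[measurable]: "f \<in> borel_measurable borel"
  shows "(\<integral>\<^sup>+x. f (x + t) \<partial>lborel) = (\<integral>\<^sup>+x. f x \<partial>lborel)"
proof -
  have "(\<integral>\<^sup>+x. f x \<partial>lborel) = (\<integral>\<^sup>+x. f (t + 1 *\<^sub>R x) \<partial>lborel)"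
    by (subst lborel_affine[of 1 t]) (simp_all add: nn_integral_density nn_integral_distr)
  then show ?thesis by (simp add: add.commute)
qed

definition gdens :: "real^'n \<Rightarrow> real" where
  "gdens \<eta> = (2 * pi) powr (- real CARD('n) / 2) * exp (- (norm \<eta>)\<^sup>2 / 2)"

lemma gdens_pos: "0 < gdens x" by (simp add: gdens_def)
lemma gdens_nonneg[simp]: "0 \<le> gdens x" by (simp add: gdens_def)

lemma gdens_measurable[measurable]: "gdens \<in> borel_measurable borel"
  unfolding gdens_def by measurable

lemma std_gauss_gdens: "std_gauss = density lborel (\<lambda>x. ennreal (gdens x))"
  by (simp add: std_gauss_def gdens_def)

lemma norm_sq_basis: "(norm (x::'a::euclidean_space))\<^sup>2 = (\<Sum>b\<in>Basis. (x \<bullet> b)\<^sup>2)"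
  unfolding power2_norm_eq_inner by (subst euclidean_inner) (simp add: power2_eq_square)

lemma gdens_prod: "gdens (x::real^'n) = (\<Prod>b\<in>Basis. std_normal_density (x \<bullet> b))"
proof -
  have "(\<Prod>b\<in>(Basis::(real^'n) set). std_normal_density (x \<bullet> b))
     = (\<Prod>b\<in>(Basis::(real^'n) set). (1 / sqrt (2 * pi))) * (\<Prod>b\<in>(Basis::(real^'n) set). exp (- (x \<bullet> b)\<^sup>2 / 2))"
    by (simp only: std_normal_density_def prod.distrib)
  also have "(\<Prod>b\<in>(Basis::(real^'n) set). exp (- (x \<bullet> b)\<^sup>2 / 2)) = exp (- (norm x)\<^sup>2 / 2)"
    by (simp add: exp_sum[symmetric] norm_sq_basis sum_divide_distrib sum_negf)
  also have "(\<Prod>b\<in>(Basis::(real^'n) set). (1 / sqrt (2 * pi))) = (2 * pi) powr (- real CARD('n) / 2)"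
  proof -
    have "(\<Prod>b\<in>(Basis::(real^'n) set). (1 / sqrt (2 * pi))) = (1 / sqrt (2 * pi)) ^ CARD('n)"
      by (simp add: prod_constant)
    also have "\<dots> = ((2 * pi) powr (- 1 / 2)) ^ CARD('n)"
      by (simp add: powr_minus_divide powr_half_sqrt)
    also have "\<dots> = (2 * pi) powr (- real CARD('n) / 2)"
      by (simp add: powr_realpow[symmetric] powr_powr)
    finally show ?thesis .
  qed
  finally show ?thesis by (simp add: gdens_def)
qed

lemma nn_integral_gdens: "(\<integral>\<^sup>+x. ennreal (gdens (x::real^'n)) \<partial>lborel) = 1"
proof -
  interpret product_sigma_finite "\<lambda>_::real^'n. lborel::real measure" by standard
  have "(\<integral>\<^sup>+x. ennreal (gdens (x::real^'n)) \<partial>lborel)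
      = (\<integral>\<^sup>+f. ennreal (gdens (\<Sum>b\<in>Basis. f b *\<^sub>R b :: real^'n)) \<partial>(\<Pi>\<^sub>M b\<in>Basis. lborel))"
    by (subst lborel_eq) (simp add: nn_integral_distr)
  also have "\<dots> = (\<integral>\<^sup>+f. (\<Prod>b\<in>(Basis::(real^'n) set). ennreal (std_normal_density (f b))) \<partial>(\<Pi>\<^sub>M b\<in>Basis. lborel))"
    by (intro nn_integral_cong)
       (simp add: gdens_prod inner_sum_left inner_Basis if_distrib prod_ennreal cong: if_cong)
  also have "\<dots> = (\<Prod>b\<in>(Basis::(real^'n) set). (\<integral>\<^sup>+t. ennreal (std_normal_density t) \<partial>lborel))"
    by (rule product_nn_integral_prod) auto
  also have "\<dots> = 1"
  proof -
    have "prob_space (density lborel (std_normal_density))"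
      by (rule prob_space_normal_density) simp
    then have "emeasure (density lborel (std_normal_density)) UNIV = 1"
      using prob_space.emeasure_space_1 by fastforce
    then have "(\<integral>\<^sup>+t. ennreal (std_normal_density t) \<partial>lborel) = 1"
      by (simp add: emeasure_density)
    then show ?thesis by simp
  qed
  finally show ?thesis .
qed

lemma prob_space_std_gauss: "prob_space (std_gauss :: (real^'n) measure)"
proof
  show "emeasure std_gauss (space std_gauss) = 1"
    by (simp add: std_gauss_gdens emeasure_density nn_integral_gdens)
qed

lemma sym_dot:
  fixes M :: "real^'n^'n"
  assumes "sym_mat M"
  shows "x \<bullet> (M *v y) = (M *v x) \<bullet> y"
proof -
  have "x \<bullet> (M *v y) = (x v* M) \<bullet> y" by (simp add: dot_lmul_matrix)
  also have "x v* M = transpose M *v x" by simp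
  also have "transpose M = M" using assms by (simp add: sym_mat_def)
  finally show ?thesis .
qed

lemma quad_nonneg_zero:
  fixes a C :: real
  assumes "a \<ge> 0" and "\<And>s. s > 0 \<Longrightarrow> 2 * s * a + s\<^sup>2 * C \<le> 0"
  shows "a = 0"
proof (rule ccontr)
  assume "a \<noteq> 0" then have a: "a > 0" using assms(1) by simp
  define s where "s = a / (\<bar>C\<bar> + 1)"
  have s: "s > 0" using a by (simp add: s_def)
  have h: "2 * s * a + s\<^sup>2 * C \<le> 0" using assms(2)[OF s] .
  have e: "2 * s * a + s\<^sup>2 * C = s * (2 * a + s * C)" by (simp add: power2_eq_square algebra_simps)
  have "s * \<bar>C\<bar> \<le> a"
  proof -
    have "s * \<bar>C\<bar> = a * (\<bar>C\<bar> / (\<bar>C\<bar> + 1))" by (simp add: s_def)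
    also have "\<dots> \<le> a * 1" using a by (intro mult_left_mono) auto
    finally show ?thesis by simp
  qed
  moreover have "- (s * \<bar>C\<bar>) \<le> s * C"
  proof -
    have "- \<bar>C\<bar> \<le> C" by simp
    then have "s * (- \<bar>C\<bar>) \<le> s * C" using s by (intro mult_left_mono) auto
    then show ?thesis by simp
  qed
  ultimately have "0 < 2 * a + s * C" using a by linarith
  then have "0 < s * (2 * a + s * C)" using s by simp
  then show False using h e by linarith
qed

lemma sum_single_nz:
  assumes "finite A" "x \<in> A" "\<And>y. y \<in> A \<Longrightarrow> y \<noteq> x \<Longrightarrow> g y = 0"
  shows "sum g A = (g x :: 'a::comm_monoid_add)"
  using sum.remove[OF assms(1,2), of g] sum.neutral[of "A - {x}" g] assms(3) by auto

definition eig_sets :: "real^'n^'n \<Rightarrow> (real^'n) set set" where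
  "eig_sets M = {B. finite B \<and> (\<forall>v\<in>B. norm v = 1 \<and> (\<exists>\<mu>. M *v v = \<mu> *\<^sub>R v)) \<and> pairwise orthogonal B}"

lemma eig_sets_indep:
  fixes M :: "real^'n^'n"
  assumes "B \<in> eig_sets M"
  shows "independent B" "card B \<le> CARD('n)"
proof -
  have "pairwise orthogonal B" "0 \<notin> B" using assms by (auto simp: eig_sets_def)
  then show "independent B" by (rule pairwise_orthogonal_independent)
  then show "card B \<le> CARD('n)" using independent_bound[of B] by simp
qed

lemma eigvec_in_complement:
  fixes M :: "real^'n^'n"
  assumes sym: "sym_mat M" and B: "B \<in> eig_sets M"
    and x0: "x0 \<noteq> 0" "\<forall>v\<in>B. v \<bullet> x0 = 0"
  shows "\<exists>u. norm u = 1 \<and> (\<forall>v\<in>B. v \<bullet> u = 0) \<and> (\<exists>\<mu>. M *v u = \<mu> *\<^sub>R u)"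
proof -
  define V where "V = {x. \<forall>v\<in>B. v \<bullet> x = 0}"
  define K where "K = V \<inter> sphere 0 1"
  have clV: "closed V" unfolding V_def
    by (simp add: Collect_ball_eq closed_INT closed_Collect_eq continuous_on_inner continuous_on_const continuous_on_id)
  have "compact K" unfolding K_def using clV by (simp add: compact_Int_closed compact_sphere Int_commute closed_Int_compact)
  moreover have "x0 /\<^sub>R norm x0 \<in> K" using x0 by (auto simp: K_def V_def)
  then have "K \<noteq> {}" by auto
  moreover have "continuous_on K (\<lambda>x. x \<bullet> (M *v x))"
    by (intro continuous_intros linear_continuous_on) (simp add: matrix_vector_mul_linear linear_linear)
  ultimately obtain u where u: "u \<in> K" and umax: "\<And>y. y \<in> K \<Longrightarrow> y \<bullet> (M *v y) \<le> u \<bullet> (M *v u)"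
    using continuous_attains_sup[of K "\<lambda>x. x \<bullet> (M *v x)"] by blast
  define l where "l = u \<bullet> (M *v u)"
  have uV: "u \<in> V" and un: "norm u = 1" using u by (auto simp: K_def)
  have bound: "x \<bullet> (M *v x) \<le> l * (x \<bullet> x)" if "x \<in> V" for x
  proof (cases "x = 0")
    case True then show ?thesis by simp
  next
    case False
    have "x /\<^sub>R norm x \<in> K" using that False by (auto simp: K_def V_def)
    from umax[OF this] have "(x /\<^sub>R norm x) \<bullet> (M *v (x /\<^sub>R norm x)) \<le> l" by (simp add: l_def)
    then have "(x \<bullet> (M *v x)) / (norm x)\<^sup>2 \<le> l"
      by (simp add: matrix_vector_mult_scaleR power2_eq_square divide_inverse mult_ac)
    then show ?thesis using False by (simp add: divide_le_eq power2_norm_eq_inner)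
  qed
  define r where "r = l *\<^sub>R u - M *v u"
  have eigB: "\<And>v. v \<in> B \<Longrightarrow> \<exists>\<mu>. M *v v = \<mu> *\<^sub>R v" using B by (auto simp: eig_sets_def)
  have rV: "r \<in> V" unfolding V_def mem_Collect_eq
  proof
    fix v assume v: "v \<in> B"
    obtain \<mu> where "M *v v = \<mu> *\<^sub>R v" using eigB[OF v] by blast
    then have "v \<bullet> (M *v u) = \<mu> * (v \<bullet> u)" using sym_dot[OF sym, of v u] by simp
    moreover have "v \<bullet> u = 0" using uV v by (simp add: V_def)
    ultimately show "v \<bullet> r = 0" by (simp add: r_def inner_diff_right)
  qed
  have ur: "u \<bullet> r = 0"
    using un by (simp add: r_def inner_diff_right l_def power2_norm_eq_inner[symmetric])
  have rMu: "r \<bullet> (M *v u) = - (r \<bullet> r)"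
  proof -
    have "M *v u = l *\<^sub>R u - r" by (simp add: r_def)
    then show ?thesis using ur by (simp add: inner_diff_right inner_commute)
  qed
  have "r \<bullet> r = 0"
  proof (rule quad_nonneg_zero)
    show "0 \<le> r \<bullet> r" by simp
    fix s :: real assume "s > 0"
    have xV: "u - s *\<^sub>R r \<in> V" using uV rV by (auto simp: V_def inner_diff_right)
    have "(u - s *\<^sub>R r) \<bullet> (M *v (u - s *\<^sub>R r)) \<le> l * ((u - s *\<^sub>R r) \<bullet> (u - s *\<^sub>R r))"
      by (rule bound[OF xV])
    moreover have "(u - s *\<^sub>R r) \<bullet> (M *v (u - s *\<^sub>R r))
        = u \<bullet> (M *v u) - 2 * s * (r \<bullet> (M *v u)) + s\<^sup>2 * (r \<bullet> (M *v r))"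
      using sym_dot[OF sym, of u r]
      by (simp add: matrix_vector_mult_diff_distrib matrix_vector_mult_scaleR inner_diff_left
          inner_diff_right algebra_simps power2_eq_square inner_commute)
    moreover have "(u - s *\<^sub>R r) \<bullet> (u - s *\<^sub>R r) = 1 + s\<^sup>2 * (r \<bullet> r)"
    proof -
      have uu: "u \<bullet> u = 1" using un by (simp add: norm_eq_1)
      show ?thesis
        by (simp only: inner_diff_left inner_diff_right inner_scaleR_left inner_scaleR_right uu ur
            inner_commute[of r u]) (simp add: power2_eq_square)
    qed
    ultimately have "l - 2 * s * (- (r \<bullet> r)) + s\<^sup>2 * (r \<bullet> (M *v r)) \<le> l * (1 + s\<^sup>2 * (r \<bullet> r))"
      by (simp add: l_def rMu)
    then show "2 * s * (r \<bullet> r) + s\<^sup>2 * (r \<bullet> (M *v r) - l * (r \<bullet> r)) \<le> 0"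
      by (simp add: algebra_simps)
  qed
  then have "r = 0" by simp
  then have "M *v u = l *\<^sub>R u" by (simp add: r_def)
  then show ?thesis using un uV by (auto simp: V_def)
qed

lemma eig_basis_exists:
  fixes M :: "real^'n^'n"
  assumes sym: "sym_mat M"
  shows "\<exists>B. B \<in> eig_sets M \<and> card B = CARD('n)"
proof -
  have "{} \<in> eig_sets M" by (simp add: eig_sets_def)
  note e0 = this
  have bnd: "\<forall>y. (\<exists>B\<in>eig_sets M. card B = y) \<longrightarrow> y \<le> CARD('n)"
    using eig_sets_indep(2) by blast
  have "\<exists>k. (\<exists>B\<in>eig_sets M. card B = k) \<and> (\<forall>y. (\<exists>B\<in>eig_sets M. card B = y) \<longrightarrow> y \<le> k)"
    by (rule Nat.ex_has_greatest_nat[OF _ bnd, of 0]) (use e0 in force)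
  then obtain B where B: "B \<in> eig_sets M" and Bmax: "\<And>B'. B' \<in> eig_sets M \<Longrightarrow> card B' \<le> card B"
    by blast
  have indB: "independent B" and cB: "card B \<le> CARD('n)" using eig_sets_indep[OF B] by auto
  have finB: "finite B" and orth: "pairwise orthogonal B" and nB: "\<And>v. v \<in> B \<Longrightarrow> norm v = 1"
    using B by (auto simp: eig_sets_def)
  show ?thesis
  proof (rule ccontr)
    assume "\<not> ?thesis"
    then have lt: "card B < CARD('n)" using B cB by fastforce
    have "span B \<noteq> UNIV"
    proof
      assume "span B = UNIV"
      then have "dim B = DIM(real^'n)" using dim_eq_full by blast
      then show False using lt dim_eq_card_independent[OF indB] by simp
    qed
    then obtain y where y: "y \<notin> span B" by blast
    define x where "x = y - (\<Sum>v\<in>B. (v \<bullet> y) *\<^sub>R v)"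
    have xorth: "\<forall>v\<in>B. v \<bullet> x = 0"
    proof
      fix v assume v: "v \<in> B"
      have "v \<bullet> (\<Sum>w\<in>B. (w \<bullet> y) *\<^sub>R w) = (\<Sum>w\<in>B. (w \<bullet> y) * (v \<bullet> w))"
        by (simp add: inner_sum_right)
      also have "\<dots> = (v \<bullet> y) * (v \<bullet> v)"
        by (rule sum_single_nz) (use v orth finB in \<open>auto simp: pairwise_def orthogonal_def\<close>)
      also have "v \<bullet> v = 1" using nB[OF v] by (simp add: power2_norm_eq_inner[symmetric])
      finally show "v \<bullet> x = 0" by (simp add: x_def inner_diff_right)
    qed
    have "x \<noteq> 0"
    proof
      assume "x = 0"
      then have "y = (\<Sum>v\<in>B. (v \<bullet> y) *\<^sub>R v)" by (simp add: x_def)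
      moreover have "(\<Sum>v\<in>B. (v \<bullet> y) *\<^sub>R v) \<in> span B"
        by (intro span_sum span_scale span_base)
      ultimately show False using y by simp
    qed
    then obtain u where u: "norm u = 1" "\<forall>v\<in>B. v \<bullet> u = 0" "\<exists>\<mu>. M *v u = \<mu> *\<^sub>R u"
      using eigvec_in_complement[OF sym B _ xorth] by blast
    have uB: "u \<notin> B" using u by (metis inner_eq_zero_iff norm_zero zero_neq_one)
    have "insert u B \<in> eig_sets M"
      using B u by (auto simp: eig_sets_def pairwise_insert orthogonal_def inner_commute)
    from Bmax[OF this] show False using finB uB by simp
  qed
qed

lemma eig_basis_expand:
  fixes B :: "(real^'n) set" and M :: "real^'n^'n"
  assumes "B \<in> eig_sets M" "card B = CARD('n)"
  shows "x = (\<Sum>v\<in>B. (v \<bullet> x) *\<^sub>R v)"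
proof -
  have indB: "independent B" using eig_sets_indep assms by blast
  have finB: "finite B" and orth: "pairwise orthogonal B" and nB: "\<And>v. v \<in> B \<Longrightarrow> norm v = 1"
    using assms by (auto simp: eig_sets_def)
  have "dim B = DIM(real^'n)" using dim_eq_card_independent[OF indB] assms by simp
  then have "span B = UNIV" using dim_eq_full by blast
  then have "x \<in> span B" by simp
  then obtain c where c: "x = (\<Sum>v\<in>B. c v *\<^sub>R v)" using span_finite[OF finB] by auto
  have "v \<bullet> x = c v" if v: "v \<in> B" for v
  proof -
    have "v \<bullet> x = (\<Sum>w\<in>B. c w * (v \<bullet> w))" by (simp add: c inner_sum_right)
    also have "\<dots> = c v * (v \<bullet> v)"
      by (rule sum_single_nz) (use v orth finB in \<open>auto simp: pairwise_def orthogonal_def\<close>)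
    also have "v \<bullet> v = 1" using nB[OF v] by (simp add: power2_norm_eq_inner[symmetric])
    finally show ?thesis by simp
  qed
  then show ?thesis by (subst c) (intro sum.cong refl, simp)
qed

definition outer_sum :: "(real^'n) set \<Rightarrow> (real^'n \<Rightarrow> real) \<Rightarrow> real^'n^'n" where
  "outer_sum B c = (\<chi> i j. \<Sum>v\<in>B. c v * v$i * v$j)"

lemma outer_sum_mult: "outer_sum B c *v x = (\<Sum>v\<in>B. (c v * (v \<bullet> x)) *\<^sub>R v)"
proof -
  have "(outer_sum B c *v x) $ i = (\<Sum>v\<in>B. (c v * (v \<bullet> x)) *\<^sub>R v) $ i" for i
  proof -
    have "(outer_sum B c *v x) $ i = (\<Sum>j\<in>UNIV. (\<Sum>v\<in>B. c v * v$i * v$j) * x$j)"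
      by (simp add: outer_sum_def matrix_vector_mult_def)
    also have "\<dots> = (\<Sum>j\<in>UNIV. \<Sum>v\<in>B. c v * v$i * v$j * x$j)"
      by (simp add: sum_distrib_right)
    also have "\<dots> = (\<Sum>v\<in>B. \<Sum>j\<in>UNIV. c v * v$i * v$j * x$j)"
      by (rule sum.swap)
    also have "\<dots> = (\<Sum>v\<in>B. (c v * (v \<bullet> x)) * v$i)"
      by (simp add: inner_vec_def sum_distrib_left sum_distrib_right mult_ac)
    also have "\<dots> = (\<Sum>v\<in>B. (c v * (v \<bullet> x)) *\<^sub>R v) $ i"
      by (simp add: sum_component)
    finally show ?thesis .
  qed
  then show ?thesis by (simp add: vec_eq_iff)
qed

lemma outer_sum_sym: "sym_mat (outer_sum B c)"
  by (simp add: sym_mat_def outer_sum_def transpose_def vec_eq_iff mult_ac)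

lemma outer_sum_quad: "x \<bullet> (outer_sum B c *v x) = (\<Sum>v\<in>B. c v * (v \<bullet> x)\<^sup>2)"
  by (simp add: outer_sum_mult inner_sum_right power2_eq_square inner_commute mult_ac)

lemma eig_coeff:
  fixes M :: "real^'n^'n"
  assumes "B \<in> eig_sets M" "v \<in> B"
  shows "v \<bullet> (\<Sum>w\<in>B. a w *\<^sub>R w) = a v"
proof -
  have finB: "finite B" and orth: "pairwise orthogonal B" and nB: "\<And>v. v \<in> B \<Longrightarrow> norm v = 1"
    using assms by (auto simp: eig_sets_def)
  have "v \<bullet> (\<Sum>w\<in>B. a w *\<^sub>R w) = (\<Sum>w\<in>B. a w * (v \<bullet> w))" by (simp add: inner_sum_right)
  also have "\<dots> = a v * (v \<bullet> v)"
    by (rule sum_single_nz) (use assms orth finB in \<open>auto simp: pairwise_def orthogonal_def\<close>)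
  also have "v \<bullet> v = 1" using nB[OF assms(2)] by (simp add: norm_eq_1)
  finally show ?thesis by simp
qed

lemma outer_sum_comp:
  fixes M :: "real^'n^'n"
  assumes "B \<in> eig_sets M"
  shows "outer_sum B c *v (outer_sum B d *v x) = outer_sum B (\<lambda>v. c v * d v) *v x"
proof -
  have "outer_sum B c *v (outer_sum B d *v x) = (\<Sum>v\<in>B. (c v * (v \<bullet> (\<Sum>w\<in>B. (d w * (w \<bullet> x)) *\<^sub>R w))) *\<^sub>R v)"
    by (simp add: outer_sum_mult)
  also have "\<dots> = (\<Sum>v\<in>B. (c v * (d v * (v \<bullet> x))) *\<^sub>R v)"
    by (intro sum.cong refl) (simp add: eig_coeff[OF assms])
  also have "\<dots> = outer_sum B (\<lambda>v. c v * d v) *v x"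
    by (simp add: outer_sum_mult mult_ac)
  finally show ?thesis .
qed

lemma matrix_vector_sum: "(A::real^'n^'m) *v (\<Sum>v\<in>B. f v) = (\<Sum>v\<in>B. A *v f v)"
  using linear_sum[OF matrix_vector_mul_linear[of A]] by simp

lemma psd_sqrt_unique_ex:
  fixes M :: "real^'n^'n"
  assumes psd: "psd_mat M"
  shows "\<exists>!S. psd_mat S \<and> S ** S = M"
proof -
  have sym: "sym_mat M" using psd by (simp add: psd_mat_def)
  obtain B where B: "B \<in> eig_sets M" and cB: "card B = CARD('n)"
    using eig_basis_exists[OF sym] by blast
  have finB: "finite B" and nB: "\<And>v. v \<in> B \<Longrightarrow> norm v = 1"
    using B by (auto simp: eig_sets_def)
  have exp: "\<And>x. x = (\<Sum>v\<in>B. (v \<bullet> x) *\<^sub>R v)" using eig_basis_expand[OF B cB] .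
  define \<mu> where "\<mu> v = v \<bullet> (M *v v)" for v
  have eig: "M *v v = \<mu> v *\<^sub>R v" if v: "v \<in> B" for v
  proof -
    obtain m where m: "M *v v = m *\<^sub>R v" using B v by (auto simp: eig_sets_def)
    have "v \<bullet> v = 1" using nB[OF v] by (simp add: norm_eq_1)
    then have "\<mu> v = m" by (simp add: \<mu>_def m)
    then show ?thesis using m by simp
  qed
  have mu0: "\<mu> v \<ge> 0" for v using psd by (simp add: psd_mat_def \<mu>_def)
  have Mx: "M *v x = outer_sum B \<mu> *v x" for x
  proof -
    have "M *v x = M *v (\<Sum>v\<in>B. (v \<bullet> x) *\<^sub>R v)" by (subst exp[of x]) simp
    also have "\<dots> = (\<Sum>v\<in>B. (v \<bullet> x) *\<^sub>R (M *v v))"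
      by (simp add: matrix_vector_sum matrix_vector_mult_scaleR)
    also have "\<dots> = outer_sum B \<mu> *v x"
      by (simp add: outer_sum_mult eig mult_ac)
    finally show ?thesis .
  qed
  define S where "S = outer_sum B (\<lambda>v. sqrt (\<mu> v))"
  have psdS: "psd_mat S"
    unfolding psd_mat_def S_def using mu0 by (auto simp: outer_sum_sym outer_sum_quad intro!: sum_nonneg)
  have SS: "S ** S = M"
  proof -
    have "(S ** S) *v x = M *v x" for x
      using mu0 by (simp add: S_def matrix_vector_mul_assoc[symmetric] outer_sum_comp[OF B] Mx)
    then show ?thesis by (simp add: matrix_eq)
  qed
  have uniq: "T = S" if T: "psd_mat T" "T ** T = M" for T
  proof -
    have symT: "sym_mat T" using T by (simp add: psd_mat_def)
    have Tv: "T *v v = sqrt (\<mu> v) *\<^sub>R v" if v: "v \<in> B" for v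
    proof (cases "\<mu> v = 0")
      case True
      have "T *v (T *v v) = 0" using eig[OF v] True T(2) by (simp add: matrix_vector_mul_assoc)
      then have "(T *v v) \<bullet> (T *v v) = 0" using sym_dot[OF symT, of v "T *v v"] by simp
      then show ?thesis using True by simp
    next
      case False
      then have sp: "sqrt (\<mu> v) > 0" using mu0[of v] by simp
      define w where "w = T *v v - sqrt (\<mu> v) *\<^sub>R v"
      have "T *v w + sqrt (\<mu> v) *\<^sub>R w = T *v (T *v v) - \<mu> v *\<^sub>R v"
        using mu0[of v] by (simp add: w_def matrix_vector_mult_diff_distrib matrix_vector_mult_scaleR
            algebra_simps real_sqrt_mult[symmetric])
      also have "T *v (T *v v) = M *v v" using T(2) by (simp add: matrix_vector_mul_assoc)
      finally have "T *v w + sqrt (\<mu> v) *\<^sub>R w = 0" using eig[OF v] by simp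
      then have "T *v w = - (sqrt (\<mu> v) *\<^sub>R w)" by (simp add: eq_neg_iff_add_eq_0)
      then have "w \<bullet> (T *v w) = - sqrt (\<mu> v) * (w \<bullet> w)" by simp
      moreover have "w \<bullet> (T *v w) \<ge> 0" using T by (simp add: psd_mat_def)
      ultimately have "w \<bullet> w \<le> 0" using sp by (simp add: mult_le_0_iff) 
      then have "w = 0" by (metis inner_eq_zero_iff inner_ge_zero order_antisym)
      then show ?thesis by (simp add: w_def)
    qed
    have "T *v x = S *v x" for x
    proof -
      have "T *v x = T *v (\<Sum>v\<in>B. (v \<bullet> x) *\<^sub>R v)" by (subst exp[of x]) simp
      also have "\<dots> = (\<Sum>v\<in>B. (v \<bullet> x) *\<^sub>R (T *v v))"
        by (simp add: matrix_vector_sum matrix_vector_mult_scaleR)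
      also have "\<dots> = S *v x"
        by (simp add: S_def outer_sum_mult Tv mult_ac)
      finally show ?thesis .
    qed
    then show ?thesis by (simp add: matrix_eq)
  qed
  show ?thesis using psdS SS uniq by blast
qed

lemma psd_sqrt_props:
  fixes M :: "real^'n^'n"
  assumes "psd_mat M"
  shows "psd_mat (psd_sqrt M)" "psd_sqrt M ** psd_sqrt M = M"
  using theI'[OF psd_sqrt_unique_ex[OF assms]] unfolding psd_sqrt_def by auto

lemma pd_imp_psd: "pd_mat M \<Longrightarrow> psd_mat M"
  unfolding pd_mat_def psd_mat_def by (metis inner_zero_left less_eq_real_def order_refl)

lemma pd_sqrt_det:
  fixes M :: "real^'n^'n"
  assumes "pd_mat M"
  shows "det (psd_sqrt M) \<noteq> 0"
proof -
  let ?S = "psd_sqrt M"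
  have SS: "?S ** ?S = M" using psd_sqrt_props[OF pd_imp_psd[OF assms]] by simp
  have "inj ((*v) ?S)"
  proof (rule injI)
    fix x y assume "?S *v x = ?S *v y"
    then have "?S *v (x - y) = 0" by (simp add: matrix_vector_mult_diff_distrib)
    then have "M *v (x - y) = 0" using SS by (metis matrix_vector_mul_assoc matrix_vector_mult_0_right)
    then have "x - y = 0" using assms unfolding pd_mat_def by (metis inner_zero_right less_irrefl)
    then show "x = y" by simp
  qed
  then show ?thesis using det_nz_iff_inj[OF matrix_vector_mul_linear[of ?S]] by simp
qed

lemma mi_left: "det (A::real^'n^'n) \<noteq> 0 \<Longrightarrow> matrix_inv A *v (A *v x) = x"
  using inv_det_ne0(3)[of A] by (simp add: matrix_vector_mul_assoc)

lemma mi_right: "det (A::real^'n^'n) \<noteq> 0 \<Longrightarrow> A *v (matrix_inv A *v x) = x"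
  using inv_det_ne0(2)[of A] by (simp add: matrix_vector_mul_assoc)

lemma complete_square:
  fixes S S' R :: "real^'n^'n" and w z :: "real^'n"
  assumes sS: "sym_mat S" and sS': "sym_mat S'" and sR: "sym_mat R"
    and dS: "det S \<noteq> 0" and dS': "det S' \<noteq> 0"
    and eq: "S ** S = S' ** S' + R ** R"
  defines "y \<equiv> z - R *v (matrix_inv S *v (matrix_inv S *v w))"
  shows "(norm (matrix_inv S' *v (w - R *v z)))\<^sup>2 + (norm z)\<^sup>2
       = ((norm y)\<^sup>2 + (norm (matrix_inv S' *v (R *v y)))\<^sup>2) + (norm (matrix_inv S *v w))\<^sup>2"
proof -
  let ?Si = "matrix_inv S" and ?Ti = "matrix_inv S'"
  define u where "u = ?Si *v (?Si *v w)"
  have w: "w = S *v (S *v u)" by (simp add: u_def mi_right[OF dS])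
  have w2: "w = S' *v (S' *v u) + R *v (R *v u)"
  proof -
    have "S *v (S *v u) = (S ** S) *v u" by (simp add: matrix_vector_mul_assoc)
    also have "\<dots> = (S' ** S' + R ** R) *v u" using eq by simp
    also have "\<dots> = S' *v (S' *v u) + R *v (R *v u)"
      by (simp add: matrix_vector_mult_add_rdistrib matrix_vector_mul_assoc)
    finally show ?thesis using w by simp
  qed
  have z: "z = y + R *v u" by (simp add: y_def u_def)
  have A: "?Ti *v (w - R *v z) = S' *v u - ?Ti *v (R *v y)"
  proof -
    have "w - R *v z = S' *v (S' *v u) - R *v y"
      using w2 z by (simp add: matrix_vector_right_distrib algebra_simps)
    then show ?thesis
      by (simp add: matrix_vector_mult_diff_distrib mi_left[OF dS'])
  qed
  have Siw: "?Si *v w = S *v u" by (simp add: w mi_left[OF dS])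
  have i1: "(S' *v u) \<bullet> (?Ti *v (R *v y)) = u \<bullet> (R *v y)"
    using sym_dot[OF sS', of u "?Ti *v (R *v y)"] by (simp add: mi_right[OF dS'])
  have i2: "y \<bullet> (R *v u) = u \<bullet> (R *v y)"
    using sym_dot[OF sR, of y u] sym_dot[OF sR, of u y] by (simp add: inner_commute)
  have i3: "(S *v u) \<bullet> (S *v u) = (S' *v u) \<bullet> (S' *v u) + (R *v u) \<bullet> (R *v u)"
  proof -
    have "(S *v u) \<bullet> (S *v u) = u \<bullet> (S *v (S *v u))" using sym_dot[OF sS, of u "S *v u"] by simp
    also have "\<dots> = u \<bullet> (S' *v (S' *v u)) + u \<bullet> (R *v (R *v u))"
      using w w2 by (metis inner_add_right)
    also have "\<dots> = (S' *v u) \<bullet> (S' *v u) + (R *v u) \<bullet> (R *v u)"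
      using sym_dot[OF sS', of u "S' *v u"] sym_dot[OF sR, of u "R *v u"] by simp
    finally show ?thesis .
  qed
  show ?thesis
    unfolding A Siw power2_norm_eq_inner
    using i1 i2 i3 z
    by (simp add: inner_diff_left inner_diff_right inner_add_left inner_add_right inner_commute algebra_simps)
qed

definition Phi :: "(real^'n) set \<Rightarrow> real^'n \<Rightarrow> real^'n^'n \<Rightarrow> ennreal" where
  "Phi A x S = (\<integral>\<^sup>+\<eta>. ennreal (gdens \<eta>) * indicator A (x + S *v \<eta>) \<partial>lborel)"

lemma Phi_measurable_aux[measurable]:
  fixes A :: "(real^'n) set"
  assumes [measurable]: "A \<in> sets borel"
  shows "(\<lambda>\<eta>. indicator A (x + S *v \<eta>) :: ennreal) \<in> borel_measurable borel"
  by measurable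

lemma phi_Phi:
  fixes A :: "(real^'n) set"
  assumes [measurable]: "A \<in> sets borel"
  shows "phi A x S = enn2real (Phi A x S)"
proof -
  have "{\<eta>. x + S *v \<eta> \<in> A} \<in> sets borel" by measurable
  then have "emeasure std_gauss {\<eta>. x + S *v \<eta> \<in> A} = Phi A x S"
    unfolding std_gauss_gdens Phi_def
    by (subst emeasure_density) (auto intro!: nn_integral_cong simp: indicator_def)
  then show ?thesis by (simp add: phi_def measure_def)
qed

lemma Phi_le1: "Phi (A::(real^'n) set) x S \<le> 1"
proof -
  have "Phi A x S \<le> (\<integral>\<^sup>+\<eta>. ennreal (gdens (\<eta>::real^'n)) \<partial>lborel)"
    unfolding Phi_def by (rule nn_integral_mono) (simp add: indicator_def)
  then show ?thesis by (simp add: nn_integral_gdens)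
qed

lemma Phi_UNIV: "Phi UNIV x S = 1"
  by (simp add: Phi_def nn_integral_gdens)

lemma Phi_dens:
  fixes A :: "(real^'n) set" and S :: "real^'n^'n"
  assumes [measurable]: "A \<in> sets borel" and dS: "det S \<noteq> 0"
  shows "(\<integral>\<^sup>+u. ennreal (gdens (matrix_inv S *v u)) * indicator A (x + u) \<partial>lborel)
       = ennreal \<bar>det S\<bar> * Phi A x S"
  unfolding Phi_def
  by (subst nn_integral_matrix[OF dS]) (simp_all add: mi_left[OF dS])

lemma gauss_conv:
  fixes S S' R :: "real^'n^'n"
  assumes sS: "sym_mat S" and sS': "sym_mat S'" and sR: "sym_mat R"
    and dS: "det S \<noteq> 0" and dS': "det S' \<noteq> 0"
    and eq: "S ** S = S' ** S' + R ** R"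
  defines "K \<equiv> (\<integral>\<^sup>+y. ennreal ((2 * pi) powr (- real CARD('n) / 2) *
              exp (- ((norm y)\<^sup>2 + (norm (matrix_inv S' *v (R *v y)))\<^sup>2) / 2)) \<partial>lborel)"
  shows "(\<integral>\<^sup>+z. ennreal (gdens (matrix_inv S' *v (w - R *v z)) * gdens z) \<partial>lborel)
       = K * ennreal (gdens (matrix_inv S *v w))"
proof -
  let ?c = "(2 * pi) powr (- real CARD('n) / 2)"
  define m where "m = R *v (matrix_inv S *v (matrix_inv S *v w))"
  define h where "h y = ?c * exp (- ((norm y)\<^sup>2 + (norm (matrix_inv S' *v (R *v y)))\<^sup>2) / 2)" for y :: "real^'n"
  have h_meas[measurable]: "h \<in> borel_measurable borel" unfolding h_def by measurable
  have pt: "gdens (matrix_inv S' *v (w - R *v z)) * gdens z = h (z - m) * gdens (matrix_inv S *v w)" for z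
  proof -
    have cs: "(norm (matrix_inv S' *v (w - R *v z)))\<^sup>2 + (norm z)\<^sup>2
       = ((norm (z - m))\<^sup>2 + (norm (matrix_inv S' *v (R *v (z - m))))\<^sup>2) + (norm (matrix_inv S *v w))\<^sup>2"
      unfolding m_def by (rule complete_square[OF sS sS' sR dS dS' eq])
    have "gdens (matrix_inv S' *v (w - R *v z)) * gdens z
        = ?c * ?c * exp (- ((norm (matrix_inv S' *v (w - R *v z)))\<^sup>2 + (norm z)\<^sup>2) / 2)"
      by (simp add: gdens_def exp_add[symmetric] add_divide_distrib)
    also have "\<dots> = ?c * ?c * exp (- ((norm (z - m))\<^sup>2 + (norm (matrix_inv S' *v (R *v (z - m))))\<^sup>2) / 2
                  + - (norm (matrix_inv S *v w))\<^sup>2 / 2)"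
      by (simp only: cs) (simp add: add_divide_distrib)
    also have "\<dots> = (?c * exp (- ((norm (z - m))\<^sup>2 + (norm (matrix_inv S' *v (R *v (z - m))))\<^sup>2) / 2))
                   * (?c * exp (- (norm (matrix_inv S *v w))\<^sup>2 / 2))"
      by (simp only: exp_add mult_ac)
    also have "\<dots> = h (z - m) * gdens (matrix_inv S *v w)"
      by (simp only: h_def gdens_def)
    finally show ?thesis .
  qed
  have "(\<integral>\<^sup>+z. ennreal (gdens (matrix_inv S' *v (w - R *v z)) * gdens z) \<partial>lborel)
      = (\<integral>\<^sup>+z. ennreal (h (z - m)) * ennreal (gdens (matrix_inv S *v w)) \<partial>lborel)"
    by (intro nn_integral_cong) (simp add: pt ennreal_mult' h_def)
  also have "\<dots> = (\<integral>\<^sup>+z. ennreal (h (z + - m)) \<partial>lborel) * ennreal (gdens (matrix_inv S *v w))"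
    by (simp add: nn_integral_multc)
  also have "(\<integral>\<^sup>+z. ennreal (h (z + - m)) \<partial>lborel) = K"
    unfolding K_def h_def[symmetric] by (rule nn_integral_translate) measurable
  finally show ?thesis .
qed

lemma ennreal_div_cancel: "d > 0 \<Longrightarrow> X = ennreal d * Y \<Longrightarrow> Y = ennreal (1 / d) * X"
  by (simp add: mult.assoc[symmetric] ennreal_mult[symmetric])

lemma law_identity_enn:
  fixes S S' R :: "real^'n^'n" and A :: "(real^'n) set"
  assumes sS: "sym_mat S" and sS': "sym_mat S'" and sR: "sym_mat R"
    and dS: "det S \<noteq> 0" and dS': "det S' \<noteq> 0"
    and eq: "S ** S = S' ** S' + R ** R" and A[measurable]: "A \<in> sets borel"
  shows "(\<integral>\<^sup>+\<xi>. ennreal (gdens \<xi>) * Phi A (x + R *v \<xi>) S' \<partial>lborel) = Phi A x S"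
proof -
  let ?Si = "matrix_inv S" and ?Ti = "matrix_inv S'"
  define K where "K = (\<integral>\<^sup>+y. ennreal ((2 * pi) powr (- real CARD('n) / 2) *
              exp (- ((norm y)\<^sup>2 + (norm (?Ti *v (R *v y)))\<^sup>2) / 2)) \<partial>lborel)"
  define c' where "c' = ennreal (1 / \<bar>det S'\<bar>)"
  define \<kappa> where "\<kappa> = c' * K * ennreal \<bar>det S\<bar>"
  have gen: "(\<integral>\<^sup>+\<xi>. ennreal (gdens \<xi>) * Phi B (y + R *v \<xi>) S' \<partial>lborel) = \<kappa> * Phi B y S"
    if B[measurable]: "B \<in> sets borel" for B y
  proof -
    have PhiT: "Phi B z S' = c' * (\<integral>\<^sup>+u. ennreal (gdens (?Ti *v u)) * indicator B (z + u) \<partial>lborel)" for z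
      unfolding c'_def using dS' by (intro ennreal_div_cancel) (simp_all add: Phi_dens[OF B dS'])
    have tr: "(\<integral>\<^sup>+u. ennreal (gdens (?Ti *v u)) * indicator B (y + R *v \<xi> + u) \<partial>lborel)
        = (\<integral>\<^sup>+w. ennreal (gdens (?Ti *v (w - R *v \<xi>))) * indicator B (y + w) \<partial>lborel)" for \<xi>
    proof -
      have "(\<integral>\<^sup>+w. ennreal (gdens (?Ti *v (w - R *v \<xi>))) * indicator B (y + w) \<partial>lborel)
          = (\<integral>\<^sup>+w. (\<lambda>u. ennreal (gdens (?Ti *v u)) * indicator B (y + R *v \<xi> + u)) (w + - (R *v \<xi>)) \<partial>lborel)"
        by (intro nn_integral_cong) (simp add: algebra_simps)
      also have "\<dots> = (\<integral>\<^sup>+u. ennreal (gdens (?Ti *v u)) * indicator B (y + R *v \<xi> + u) \<partial>lborel)"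
        by (rule nn_integral_translate) measurable
      finally show ?thesis by simp
    qed
    have "(\<integral>\<^sup>+\<xi>. ennreal (gdens \<xi>) * Phi B (y + R *v \<xi>) S' \<partial>lborel)
        = (\<integral>\<^sup>+\<xi>. c' * (\<integral>\<^sup>+w. ennreal (gdens \<xi>) * (ennreal (gdens (?Ti *v (w - R *v \<xi>))) * indicator B (y + w)) \<partial>lborel) \<partial>lborel)"
      by (intro nn_integral_cong) (simp add: PhiT tr nn_integral_cmult mult_ac)
    also have "\<dots> = c' * (\<integral>\<^sup>+\<xi>. (\<integral>\<^sup>+w. ennreal (gdens \<xi>) * (ennreal (gdens (?Ti *v (w - R *v \<xi>))) * indicator B (y + w)) \<partial>lborel) \<partial>lborel)"
      by (rule nn_integral_cmult) measurable
    also have "(\<integral>\<^sup>+\<xi>. (\<integral>\<^sup>+w. ennreal (gdens \<xi>) * (ennreal (gdens (?Ti *v (w - R *v \<xi>))) * indicator B (y + w)) \<partial>lborel) \<partial>lborel)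
        = (\<integral>\<^sup>+w. (\<integral>\<^sup>+\<xi>. ennreal (gdens \<xi>) * (ennreal (gdens (?Ti *v (w - R *v \<xi>))) * indicator B (y + w)) \<partial>lborel) \<partial>lborel)"
      by (rule lborel_pair.Fubini') measurable
    also have "\<dots> = (\<integral>\<^sup>+w. indicator B (y + w) * (\<integral>\<^sup>+\<xi>. ennreal (gdens (?Ti *v (w - R *v \<xi>)) * gdens \<xi>) \<partial>lborel) \<partial>lborel)"
      by (intro nn_integral_cong) (simp add: nn_integral_cmult[symmetric] ennreal_mult' mult_ac)
    also have "\<dots> = (\<integral>\<^sup>+w. K * (ennreal (gdens (?Si *v w)) * indicator B (y + w)) \<partial>lborel)"
      by (intro nn_integral_cong, subst gauss_conv[OF sS sS' sR dS dS' eq]) (simp add: K_def mult_ac)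
    also have "\<dots> = K * (\<integral>\<^sup>+w. ennreal (gdens (?Si *v w)) * indicator B (y + w) \<partial>lborel)"
      by (rule nn_integral_cmult) measurable
    also have "\<dots> = K * (ennreal \<bar>det S\<bar> * Phi B y S)"
      by (simp add: Phi_dens[OF B dS])
    finally show ?thesis by (simp add: \<kappa>_def mult_ac)
  qed
  have "\<kappa> = 1"
  proof -
    have "(\<integral>\<^sup>+\<xi>. ennreal (gdens \<xi>) * Phi UNIV (x + R *v \<xi>) S' \<partial>lborel) = \<kappa> * Phi UNIV x S"
      by (rule gen) simp
    then show ?thesis by (simp add: Phi_UNIV nn_integral_gdens)
  qed
  then show ?thesis using gen[OF A, of x] by simp
qed

lemma Phi_meas[measurable]:
  fixes A :: "(real^'n) set"
  assumes [measurable]: "A \<in> sets borel"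
  shows "(\<lambda>y. Phi A y S) \<in> borel_measurable borel"
  unfolding Phi_def by measurable

lemma Phi_fin: "Phi (A::(real^'n) set) x S \<noteq> top"
proof
  assume "Phi A x S = top"
  then have "(top::ennreal) \<le> 1" using Phi_le1[of A x S] by simp
  then show False by (simp add: top_unique)
qed

lemma Phi_enn: "ennreal (enn2real (Phi (A::(real^'n) set) x S)) = Phi A x S"
  by (rule ennreal_enn2real) (simp add: Phi_fin less_top[symmetric])

lemma sets_std_gauss[simp, measurable_cong]: "sets (std_gauss :: (real^'n) measure) = sets borel"
  by (simp add: std_gauss_gdens)

lemma phi_meas[measurable]:
  fixes A :: "(real^'n) set"
  assumes [measurable]: "A \<in> sets borel"
  shows "(\<lambda>y. phi A y S) \<in> borel_measurable borel"
  by (simp add: phi_Phi)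

lemma phi_bounds: "0 \<le> phi A x S" "phi A x S \<le> 1"
  by (auto simp: phi_def prob_space.prob_le_1[OF prob_space_std_gauss])

lemma law_identity:
  fixes S S' R :: "real^'n^'n" and A :: "(real^'n) set"
  assumes sS: "sym_mat S" and sS': "sym_mat S'" and sR: "sym_mat R"
    and dS: "det S \<noteq> 0" and dS': "det S' \<noteq> 0"
    and eq: "S ** S = S' ** S' + R ** R" and A[measurable]: "A \<in> sets borel"
  shows "phi A x S = (\<integral>\<xi>. phi A (x + R *v \<xi>) S' \<partial>std_gauss)"
proof -
  interpret prob_space "std_gauss :: (real^'n) measure" by (rule prob_space_std_gauss)
  have meas: "(\<lambda>\<xi>. phi A (x + R *v \<xi>) S') \<in> borel_measurable std_gauss" by simp
  have int: "integrable std_gauss (\<lambda>\<xi>. phi A (x + R *v \<xi>) S')"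
  proof (rule integrable_const_bound[where B=1])
    show "AE \<xi> in std_gauss. norm (phi A (x + R *v \<xi>) S') \<le> 1"
      by (intro AE_I2) (simp add: abs_of_nonneg[OF phi_bounds(1)] phi_bounds(2))
  qed (rule meas)
  have "(\<integral>\<^sup>+\<xi>. ennreal (phi A (x + R *v \<xi>) S') \<partial>std_gauss)
      = (\<integral>\<^sup>+\<xi>. ennreal (gdens \<xi>) * Phi A (x + R *v \<xi>) S' \<partial>lborel)"
    unfolding std_gauss_gdens
    by (subst nn_integral_density) (auto simp: phi_Phi Phi_enn)
  also have "\<dots> = Phi A x S" by (rule law_identity_enn[OF assms])
  finally have ch: "(\<integral>\<^sup>+\<xi>. ennreal (phi A (x + R *v \<xi>) S') \<partial>std_gauss) = Phi A x S" .
  have ae: "AE \<xi> in std_gauss. 0 \<le> phi A (x + R *v \<xi>) S'" by (simp add: phi_bounds)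
  have "ennreal (\<integral>\<xi>. phi A (x + R *v \<xi>) S' \<partial>std_gauss) = Phi A x S"
    using nn_integral_eq_integral[OF int ae] ch by simp
  moreover have nn: "0 \<le> (\<integral>\<xi>. phi A (x + R *v \<xi>) S' \<partial>std_gauss)"
    by (rule integral_nonneg_AE[OF ae])
  ultimately have "enn2real (Phi A x S) = (\<integral>\<xi>. phi A (x + R *v \<xi>) S' \<partial>std_gauss)"
    by (metis enn2real_ennreal)
  then show ?thesis by (simp only: phi_Phi[OF A])
qed

lemma mvt_bound:
  fixes F F' :: "real \<Rightarrow> real"
  assumes der: "\<And>t. \<bar>t - t0\<bar> < \<delta> \<Longrightarrow> (F has_real_derivative F' t) (at t)"
    and bd: "\<And>t. \<bar>t - t0\<bar> < \<delta> \<Longrightarrow> \<bar>F' t\<bar> \<le> G"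
    and t: "\<bar>t - t0\<bar> < \<delta>" "t \<noteq> t0"
  shows "\<bar>(F t - F t0) / (t - t0)\<bar> \<le> G"
proof (cases "t0 < t")
  case True
  have "\<And>x. t0 \<le> x \<Longrightarrow> x \<le> t \<Longrightarrow> DERIV F x :> F' x"
    using t True by (intro der) auto
  then obtain z where z: "t0 < z" "z < t" "F t - F t0 = (t - t0) * F' z"
    using MVT2[OF True, of F F'] by blast
  have "\<bar>z - t0\<bar> < \<delta>" using z t True by auto
  then show ?thesis using z bd True by simp
next
  case False
  then have lt: "t < t0" using t by simp
  have "\<And>x. t \<le> x \<Longrightarrow> x \<le> t0 \<Longrightarrow> DERIV F x :> F' x"
    using t lt by (intro der) auto
  then obtain z where z: "t < z" "z < t0" "F t0 - F t = (t0 - t) * F' z"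
    using MVT2[OF lt, of F F'] by blast
  have "\<bar>z - t0\<bar> < \<delta>" using z t lt by auto
  moreover have "(F t - F t0) / (t - t0) = F' z" using z lt
  proof -
    have "F t - F t0 = (t - t0) * F' z" using z(3) by (simp add: algebra_simps)
    then show ?thesis using lt by simp
  qed
  ultimately show ?thesis using bd by simp
qed

lemma DU:
  fixes M :: "'a measure" and f f' :: "real \<Rightarrow> 'a \<Rightarrow> real" and g :: "'a \<Rightarrow> real"
  assumes d: "\<delta> > 0"
    and fm: "\<And>t. f t \<in> borel_measurable M"
    and f'm: "f' t0 \<in> borel_measurable M"
    and fi: "integrable M (f t0)"
    and gi: "integrable M g"
    and der: "\<And>\<omega> t. \<omega> \<in> space M \<Longrightarrow> \<bar>t - t0\<bar> < \<delta> \<Longrightarrow> ((\<lambda>s. f s \<omega>) has_real_derivative f' t \<omega>) (at t)"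
    and bd: "\<And>\<omega> t. \<omega> \<in> space M \<Longrightarrow> \<bar>t - t0\<bar> < \<delta> \<Longrightarrow> \<bar>f' t \<omega>\<bar> \<le> g \<omega>"
  shows "((\<lambda>t. \<integral>\<omega>. f t \<omega> \<partial>M) has_real_derivative (\<integral>\<omega>. f' t0 \<omega> \<partial>M)) (at t0)"
proof -
  define q where "q t \<omega> = (f t \<omega> - f t0 \<omega>) / (t - t0)" for t \<omega>
  have qb: "\<bar>q t \<omega>\<bar> \<le> g \<omega>" if "\<omega> \<in> space M" "\<bar>t - t0\<bar> < \<delta>" "t \<noteq> t0" for t \<omega>
    unfolding q_def by (rule mvt_bound[where F'="\<lambda>s. f' s \<omega>"]) (use that der bd in auto)
  have qm: "q t \<in> borel_measurable M" for t unfolding q_def using fm by measurable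
  have fti: "integrable M (f t)" if t: "\<bar>t - t0\<bar> < \<delta>" for t
  proof (cases "t = t0")
    case True then show ?thesis using fi by simp
  next
    case False
    have "integrable M (\<lambda>\<omega>. \<bar>f t0 \<omega>\<bar> + \<bar>t - t0\<bar> * g \<omega>)"
      using fi gi by auto
    moreover have "AE \<omega> in M. norm (f t \<omega>) \<le> norm (\<bar>f t0 \<omega>\<bar> + \<bar>t - t0\<bar> * g \<omega>)"
    proof (rule AE_I2)
      fix \<omega> assume \<omega>: "\<omega> \<in> space M"
      have "f t \<omega> = f t0 \<omega> + (t - t0) * q t \<omega>" using False by (simp add: q_def)
      moreover have "\<bar>(t - t0) * q t \<omega>\<bar> \<le> \<bar>t - t0\<bar> * g \<omega>"
        using qb[OF \<omega> t False] by (simp add: abs_mult mult_left_mono)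
      ultimately show "norm (f t \<omega>) \<le> norm (\<bar>f t0 \<omega>\<bar> + \<bar>t - t0\<bar> * g \<omega>)" by simp
    qed
    ultimately show ?thesis using fm Bochner_Integration.integrable_bound by blast
  qed
  have "((\<lambda>t. ((\<integral>\<omega>. f t \<omega> \<partial>M) - (\<integral>\<omega>. f t0 \<omega> \<partial>M)) / (t - t0)) \<longlongrightarrow> (\<integral>\<omega>. f' t0 \<omega> \<partial>M)) (at t0)"
    unfolding tendsto_at_iff_sequentially comp_def
  proof (intro allI impI)
    fix X :: "nat \<Rightarrow> real" assume X: "\<forall>i. X i \<in> UNIV - {t0}" and lim: "X \<longlonglongrightarrow> t0"
    obtain N where N: "\<And>n. n \<ge> N \<Longrightarrow> \<bar>X n - t0\<bar> < \<delta>"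
      using lim d unfolding LIMSEQ_def dist_real_def by blast
    have eq: "((\<integral>\<omega>. f (X (n + N)) \<omega> \<partial>M) - (\<integral>\<omega>. f t0 \<omega> \<partial>M)) / (X (n + N) - t0)
        = (\<integral>\<omega>. q (X (n + N)) \<omega> \<partial>M)" for n
      unfolding q_def using fti[OF N[of "n + N"]] fi by simp
    have "(\<lambda>n. \<integral>\<omega>. q (X (n + N)) \<omega> \<partial>M) \<longlonglongrightarrow> (\<integral>\<omega>. f' t0 \<omega> \<partial>M)"
    proof (rule integral_dominated_convergence[where w=g])
      show "AE \<omega> in M. (\<lambda>n. q (X (n + N)) \<omega>) \<longlonglongrightarrow> f' t0 \<omega>"
      proof (rule AE_I2)
        fix \<omega> assume \<omega>: "\<omega> \<in> space M"
        have "((\<lambda>s. f s \<omega>) has_real_derivative f' t0 \<omega>) (at t0)" using der[OF \<omega>] d by simp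
        then have "((\<lambda>s. (f s \<omega> - f t0 \<omega>) / (s - t0)) \<longlongrightarrow> f' t0 \<omega>) (at t0)"
          by (simp add: has_field_derivative_iff)
        then have H: "\<forall>Y. (\<forall>i. Y i \<in> UNIV - {t0}) \<longrightarrow> Y \<longlonglongrightarrow> t0 \<longrightarrow> (\<lambda>n. (f (Y n) \<omega> - f t0 \<omega>) / (Y n - t0)) \<longlonglongrightarrow> f' t0 \<omega>"
          unfolding tendsto_at_iff_sequentially comp_def by blast
        have "(\<lambda>n. X (n + N)) \<longlonglongrightarrow> t0" using lim by (rule LIMSEQ_ignore_initial_segment)
        moreover have "\<forall>n. X (n + N) \<in> UNIV - {t0}" using X by simp
        ultimately show "(\<lambda>n. q (X (n + N)) \<omega>) \<longlonglongrightarrow> f' t0 \<omega>"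
          using H[rule_format, of "\<lambda>n. X (n + N)"] unfolding q_def by simp
      qed
      show "AE \<omega> in M. norm (q (X (n + N)) \<omega>) \<le> g \<omega>" for n
        by (rule AE_I2) (use qb N X in auto)
    qed (use f'm qm gi in auto)
    then show "(\<lambda>n. ((\<integral>\<omega>. f (X n) \<omega> \<partial>M) - (\<integral>\<omega>. f t0 \<omega> \<partial>M)) / (X n - t0)) \<longlonglongrightarrow> (\<integral>\<omega>. f' t0 \<omega> \<partial>M)"
      unfolding eq[symmetric] by (rule LIMSEQ_offset)
  qed
  then show ?thesis by (simp add: has_field_derivative_iff)
qed

datatype 'v pexp = PC real | PL 'v | PA "'v pexp" "'v pexp" | PM "'v pexp" "'v pexp"

fun pev :: "(real^'n) pexp \<Rightarrow> real^'n \<Rightarrow> real" where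
  "pev (PC c) u = c"
| "pev (PL a) u = a \<bullet> u"
| "pev (PA p q) u = pev p u + pev q u"
| "pev (PM p q) u = pev p u * pev q u"

fun pdv :: "real^'n \<Rightarrow> (real^'n) pexp \<Rightarrow> (real^'n) pexp" where
  "pdv e (PC c) = PC 0"
| "pdv e (PL a) = PC (a \<bullet> e)"
| "pdv e (PA p q) = PA (pdv e p) (pdv e q)"
| "pdv e (PM p q) = PA (PM (pdv e p) q) (PM p (pdv e q))"

lemma pev_deriv: "((\<lambda>s. pev p (u + s *\<^sub>R e)) has_real_derivative pev (pdv e p) (u + t *\<^sub>R e)) (at t)"
proof (induction p)
  case (PC c) then show ?case by simp
next
  case (PL a)
  have "(\<lambda>s. pev (PL a) (u + s *\<^sub>R e)) = (\<lambda>s. a \<bullet> u + s * (a \<bullet> e))"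
    by (simp add: inner_add_right)
  moreover have "((\<lambda>s. a \<bullet> u + s * (a \<bullet> e)) has_real_derivative (a \<bullet> e)) (at t)"
    by (auto intro!: derivative_eq_intros)
  ultimately show ?case by simp
next
  case (PA p q) then show ?case by (auto intro!: derivative_eq_intros)
next
  case (PM p q)
  show ?case using DERIV_mult[OF PM.IH] by (simp add: mult_ac)
qed

lemma pev_cont: "continuous_on UNIV (pev p)"
  by (induction p) (auto intro!: continuous_intros)

lemma pev_meas[measurable]: "pev p \<in> borel_measurable borel"
  using pev_cont by (rule borel_measurable_continuous_onI)

lemma pev_growth: "\<exists>C D. 0 \<le> C \<and> 0 \<le> D \<and> (\<forall>u. \<bar>pev p u\<bar> \<le> C * exp (D * norm u))"
proof (induction p)
  case (PC c) then show ?case by (intro exI[of _ "\<bar>c\<bar>"] exI[of _ 0]) simp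
next
  case (PL a)
  have "\<bar>a \<bullet> u\<bar> \<le> norm a * exp (1 * norm u)" for u
  proof -
    have "\<bar>a \<bullet> u\<bar> \<le> norm a * norm u" by (rule Cauchy_Schwarz_ineq2)
    also have "\<dots> \<le> norm a * exp (norm u)"
      by (intro mult_left_mono) (auto intro: order_trans[OF _ exp_ge_add_one_self])
    finally show ?thesis by simp
  qed
  then show ?case by (intro exI[of _ "norm a"] exI[of _ 1]) simp
next
  case (PA p q)
  then obtain C1 D1 C2 D2 where h: "0 \<le> C1" "0 \<le> D1" "\<forall>u. \<bar>pev p u\<bar> \<le> C1 * exp (D1 * norm u)"
    "0 \<le> C2" "0 \<le> D2" "\<forall>u. \<bar>pev q u\<bar> \<le> C2 * exp (D2 * norm u)" by blast
  have "\<bar>pev (PA p q) u\<bar> \<le> (C1 + C2) * exp (max D1 D2 * norm u)" for u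
  proof -
    have "exp (D1 * norm u) \<le> exp (max D1 D2 * norm u)" "exp (D2 * norm u) \<le> exp (max D1 D2 * norm u)"
      by (auto intro!: mult_right_mono)
    then have "C1 * exp (D1 * norm u) + C2 * exp (D2 * norm u) \<le> (C1 + C2) * exp (max D1 D2 * norm u)"
      using h by (simp add: distrib_right add_mono mult_left_mono)
    then show ?thesis using h(3,6)[rule_format, of u] by simp
  qed
  then show ?case using h by (intro exI[of _ "C1 + C2"] exI[of _ "max D1 D2"]) auto
next
  case (PM p q)
  then obtain C1 D1 C2 D2 where h: "0 \<le> C1" "0 \<le> D1" "\<forall>u. \<bar>pev p u\<bar> \<le> C1 * exp (D1 * norm u)"
    "0 \<le> C2" "0 \<le> D2" "\<forall>u. \<bar>pev q u\<bar> \<le> C2 * exp (D2 * norm u)" by blast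
  have "\<bar>pev (PM p q) u\<bar> \<le> (C1 * C2) * exp ((D1 + D2) * norm u)" for u
  proof -
    have "\<bar>pev (PM p q) u\<bar> = \<bar>pev p u\<bar> * \<bar>pev q u\<bar>" by (simp add: abs_mult)
    also have "\<dots> \<le> (C1 * exp (D1 * norm u)) * (C2 * exp (D2 * norm u))"
      using h by (intro mult_mono) auto
    also have "\<dots> = (C1 * C2) * exp ((D1 + D2) * norm u)"
      by (simp add: distrib_right exp_add[symmetric] algebra_simps)
    finally show ?thesis .
  qed
  then show ?case using h by (intro exI[of _ "C1 * C2"] exI[of _ "D1 + D2"]) auto
qed

definition gE :: "real^'n^'n \<Rightarrow> real^'n \<Rightarrow> real" where
  "gE N v = exp (- (norm (N *v v))\<^sup>2 / 2)"

definition hf :: "real^'n^'n \<Rightarrow> (real^'n) pexp \<Rightarrow> real^'n \<Rightarrow> real" where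
  "hf N p v = pev p v * gE N v"

definition hdv :: "real^'n^'n \<Rightarrow> real^'n \<Rightarrow> (real^'n) pexp \<Rightarrow> (real^'n) pexp" where
  "hdv N e p = PA (pdv e p) (PM (PC (-1)) (PM p (PL (transpose N *v (N *v e)))))"

lemma gE_meas[measurable]: "gE N \<in> borel_measurable borel"
  unfolding gE_def by measurable

lemma hf_meas[measurable]: "hf N p \<in> borel_measurable borel"
  unfolding hf_def by measurable

lemma gE_pos: "0 < gE N v" by (simp add: gE_def)

lemma transpose_dot: "v \<bullet> (transpose N *v w) = (N *v v) \<bullet> (w :: real^'n)"
proof -
  have "v \<bullet> (transpose N *v w) = v \<bullet> (w v* N)" by simp
  also have "\<dots> = (w v* N) \<bullet> v" by (simp add: inner_commute)
  also have "\<dots> = w \<bullet> (N *v v)" by (simp add: dot_lmul_matrix)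
  finally show ?thesis by (simp add: inner_commute)
qed

lemma gE_deriv:
  "((\<lambda>s. gE N (u + s *\<^sub>R e)) has_real_derivative
      gE N (u + t *\<^sub>R e) * (- ((N *v (u + t *\<^sub>R e)) \<bullet> (N *v e)))) (at t)"
proof -
  define a where "a = N *v u"
  define b where "b = N *v e"
  have eq: "(norm (N *v (u + s *\<^sub>R e)))\<^sup>2 = a \<bullet> a + 2 * s * (a \<bullet> b) + s\<^sup>2 * (b \<bullet> b)" for s
  proof -
    have "N *v (u + s *\<^sub>R e) = a + s *\<^sub>R b"
      by (simp add: a_def b_def matrix_vector_right_distrib matrix_vector_mult_scaleR)
    then show ?thesis unfolding power2_norm_eq_inner
      by (simp add: inner_add_left inner_add_right inner_commute[of b a] power2_eq_square algebra_simps)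
  qed
  have g: "(\<lambda>s. gE N (u + s *\<^sub>R e)) = (\<lambda>s. exp (- (a \<bullet> a + 2 * s * (a \<bullet> b) + s\<^sup>2 * (b \<bullet> b)) / 2))"
    by (simp add: gE_def eq)
  have "((\<lambda>s. exp (- (a \<bullet> a + 2 * s * (a \<bullet> b) + s\<^sup>2 * (b \<bullet> b)) / 2)) has_real_derivative
      exp (- (a \<bullet> a + 2 * t * (a \<bullet> b) + t\<^sup>2 * (b \<bullet> b)) / 2) * (- (a \<bullet> b + t * (b \<bullet> b)))) (at t)"
    by (auto intro!: derivative_eq_intros simp: power2_eq_square field_simps)
  moreover have "(N *v (u + t *\<^sub>R e)) \<bullet> (N *v e) = a \<bullet> b + t * (b \<bullet> b)"
    by (simp add: a_def b_def matrix_vector_right_distrib matrix_vector_mult_scaleR inner_add_left)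
  ultimately show ?thesis by (simp add: g gE_def eq)
qed

lemma vmul_dot[simp]: "(u::real^'n) \<bullet> (w v* N) = (N *v u) \<bullet> w"
  by (metis dot_lmul_matrix inner_commute)

lemma hf_deriv:
  "((\<lambda>s. hf N p (u + s *\<^sub>R e)) has_real_derivative hf N (hdv N e p) (u + t *\<^sub>R e)) (at t)"
  unfolding hf_def
  by (rule DERIV_cong[OF DERIV_mult[OF pev_deriv gE_deriv]]) (simp add: hdv_def inner_commute algebra_simps)

lemma gE_bound:
  fixes N :: "real^'n^'n"
  assumes dN: "det N \<noteq> 0"
  shows "\<exists>k>0. \<forall>v. gE N v \<le> exp (- k * (norm v)\<^sup>2)"
proof -
  let ?M = "matrix_inv N"
  obtain B where B: "B > 0" "\<And>x. norm (?M *v x) \<le> B * norm x"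
    using linear_bounded_pos[OF matrix_vector_mul_linear[of ?M]] by blast
  have "norm v \<le> B * norm (N *v v)" for v
    using B(2)[of "N *v v"] by (simp add: mi_left[OF dN])
  then have nv: "(norm v)\<^sup>2 / B\<^sup>2 \<le> (norm (N *v v))\<^sup>2" for v
    using B(1) by (simp add: divide_le_eq power_mult_distrib[symmetric] power_mono mult.commute)
  show ?thesis
  proof (intro exI[of _ "1 / (2 * B\<^sup>2)"] conjI allI)
    show "0 < 1 / (2 * B\<^sup>2)" using B by simp
    fix v
    have "- (norm (N *v v))\<^sup>2 / 2 \<le> - (1 / (2 * B\<^sup>2)) * (norm v)\<^sup>2"
      using nv[of v] by (simp add: field_simps)
    then show "gE N v \<le> exp (- (1 / (2 * B\<^sup>2)) * (norm v)\<^sup>2)"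
      by (simp add: gE_def)
  qed
qed

lemma quad_bound: "0 < (k::real) \<Longrightarrow> D * x - k / 4 * x\<^sup>2 \<le> D\<^sup>2 / k"
proof -
  assume k: "0 < k"
  have "0 \<le> k / 4 * (x - 2 * D / k)\<^sup>2" using k by simp
  also have "k / 4 * (x - 2 * D / k)\<^sup>2 = k / 4 * x\<^sup>2 - D * x + D\<^sup>2 / k"
    using k by (simp add: power2_eq_square field_simps)
  finally show ?thesis by simp
qed

lemma hf_dom:
  fixes N :: "real^'n^'n"
  assumes dN: "det N \<noteq> 0" and r: "0 \<le> r"
  shows "\<exists>C k. 0 < k \<and> (\<forall>v0 v. norm (v - v0) \<le> r \<longrightarrow> \<bar>hf N p v\<bar> \<le> C * exp (- k * (norm v0)\<^sup>2))"
proof -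
  obtain C D where CD: "0 \<le> C" "0 \<le> D" "\<And>u. \<bar>pev p u\<bar> \<le> C * exp (D * norm u)"
    using pev_growth[of p] by blast
  obtain k where k: "k > 0" "\<And>v. gE N v \<le> exp (- k * (norm v)\<^sup>2)"
    using gE_bound[OF dN] by blast
  define C' where "C' = C * exp (D * r + k * r\<^sup>2 + D\<^sup>2 / k)"
  have main: "\<forall>v0 v. norm (v - v0) \<le> r \<longrightarrow> \<bar>hf N p v\<bar> \<le> C' * exp (- (k / 4) * (norm v0)\<^sup>2)"
  proof (intro allI impI)
    fix v0 v :: "real^'n" assume vr: "norm (v - v0) \<le> r"
    have n1: "norm v \<le> norm v0 + r" using vr norm_triangle_ineq2[of v v0] by simp
    have n2: "(norm v0)\<^sup>2 / 2 - r\<^sup>2 \<le> (norm v)\<^sup>2"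
    proof -
      have "norm v0 \<le> norm v + r" using vr norm_triangle_ineq3[of v0 v] norm_minus_commute[of v v0]
        by (metis add.commute add_le_cancel_left diff_le_eq norm_triangle_ineq2 order_trans)
      then have "(norm v0)\<^sup>2 \<le> (norm v + r)\<^sup>2" by (simp add: power_mono)
      also have "\<dots> \<le> 2 * (norm v)\<^sup>2 + 2 * r\<^sup>2"
      proof -
        have e1: "(norm v + r)\<^sup>2 = (norm v)\<^sup>2 + 2 * norm v * r + r\<^sup>2" by (simp add: power2_eq_square algebra_simps)
        have e2: "(norm v - r)\<^sup>2 = (norm v)\<^sup>2 - 2 * norm v * r + r\<^sup>2" by (simp add: power2_eq_square algebra_simps)
        have "0 \<le> (norm v - r)\<^sup>2" by simp
        then show ?thesis using e1 e2 by linarith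
      qed
      finally show ?thesis by simp
    qed
    have "\<bar>hf N p v\<bar> = \<bar>pev p v\<bar> * gE N v" by (simp add: hf_def abs_mult gE_pos less_imp_le)
    also have "\<dots> \<le> (C * exp (D * norm v)) * exp (- k * (norm v)\<^sup>2)"
      using CD(3)[of v] k(2)[of v] CD(1) by (intro mult_mono) (auto simp: gE_pos less_imp_le)
    also have "\<dots> = C * exp (D * norm v - k * (norm v)\<^sup>2)" by (simp add: mult.assoc exp_add[symmetric])
    also have "\<dots> \<le> C * exp (D * (norm v0 + r) - k * ((norm v0)\<^sup>2 / 2 - r\<^sup>2))"
      using CD(1,2) k(1) n1 n2 by (intro mult_left_mono) (auto intro!: add_mono mult_left_mono diff_mono)
    also have "D * (norm v0 + r) - k * ((norm v0)\<^sup>2 / 2 - r\<^sup>2)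
        = (D * r + k * r\<^sup>2) + (D * norm v0 - k / 4 * (norm v0)\<^sup>2) - k / 4 * (norm v0)\<^sup>2"
      by (simp add: algebra_simps)
    also have "C * exp \<dots> \<le> C * exp ((D * r + k * r\<^sup>2) + D\<^sup>2 / k - k / 4 * (norm v0)\<^sup>2)"
      using quad_bound[of k D "norm v0"] k(1) CD(1) by (intro mult_left_mono) auto
    also have "\<dots> = C' * exp (- (k / 4) * (norm v0)\<^sup>2)"
    proof -
      have "(D * r + k * r\<^sup>2) + D\<^sup>2 / k - k / 4 * (norm v0)\<^sup>2 = (D * r + k * r\<^sup>2 + D\<^sup>2 / k) + (- (k / 4) * (norm v0)\<^sup>2)"
        by simp
      then show ?thesis by (simp only: C'_def mult.assoc exp_add)
    qed
    finally show "\<bar>hf N p v\<bar> \<le> C' * exp (- (k / 4) * (norm v0)\<^sup>2)" .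
  qed
  show ?thesis using k(1) main by (intro exI[of _ C'] exI[of _ "k / 4"]) simp
qed

lemma integrable_gdens: "integrable lborel (gdens :: real^'n \<Rightarrow> real)"
  unfolding integrable_iff_bounded by (simp add: nn_integral_gdens)

lemma gauss_int:
  assumes c: "0 < c"
  shows "integrable lborel (\<lambda>v::real^'n. exp (- c * (norm v)\<^sup>2))"
proof -
  define s where "s = 1 / sqrt (2 * c)"
  have s: "s > 0" using c by (simp add: s_def)
  have cs: "c * s\<^sup>2 = 1 / 2" using c by (simp add: s_def power_divide)
  have "(\<integral>\<^sup>+v. ennreal (exp (- c * (norm (v::real^'n))\<^sup>2)) \<partial>lborel)
      = ennreal (\<bar>s\<bar> ^ DIM(real^'n)) * (\<integral>\<^sup>+x. ennreal (exp (- c * (norm (0 + s *\<^sub>R (x::real^'n)))\<^sup>2)) \<partial>lborel)"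
    by (subst lborel_affine[of s 0]) (use s in \<open>simp_all add: nn_integral_density nn_integral_distr nn_integral_cmult\<close>)
  also have "(\<integral>\<^sup>+x. ennreal (exp (- c * (norm (0 + s *\<^sub>R (x::real^'n)))\<^sup>2)) \<partial>lborel)
      = (\<integral>\<^sup>+x. ennreal ((2 * pi) powr (real CARD('n) / 2)) * ennreal (gdens (x::real^'n)) \<partial>lborel)"
  proof (intro nn_integral_cong)
    fix x :: "real^'n"
    have "- c * (norm (0 + s *\<^sub>R x))\<^sup>2 = - (norm x)\<^sup>2 / 2"
      using s cs by (simp add: power_mult_distrib mult.assoc[symmetric])
    moreover have "(2 * pi) powr (real CARD('n) / 2) * (2 * pi) powr (- real CARD('n) / 2) = 1"
      by (simp add: powr_add[symmetric])
    ultimately show "ennreal (exp (- c * (norm (0 + s *\<^sub>R x))\<^sup>2)) = ennreal ((2 * pi) powr (real CARD('n) / 2)) * ennreal (gdens x)"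
      by (simp add: gdens_def ennreal_mult'[symmetric] mult.assoc[symmetric])
  qed
  also have "\<dots> = ennreal ((2 * pi) powr (real CARD('n) / 2))"
    by (simp add: nn_integral_cmult nn_integral_gdens)
  finally have "(\<integral>\<^sup>+v. ennreal (exp (- c * (norm (v::real^'n))\<^sup>2)) \<partial>lborel) < \<infinity>"
    by (simp add: ennreal_mult_less_top)
  then show ?thesis unfolding integrable_iff_bounded by simp
qed

lemma integrable_translate:
  fixes f :: "'a::euclidean_space \<Rightarrow> real"
  assumes "integrable lborel f"
  shows "integrable lborel (\<lambda>w. f (w + a))"
proof -
  have [measurable]: "f \<in> borel_measurable borel" using assms by simp
  have "(\<integral>\<^sup>+w. ennreal (norm (f (w + a))) \<partial>lborel) = (\<integral>\<^sup>+w. ennreal (norm (f w)) \<partial>lborel)"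
    by (rule nn_integral_translate[where f="\<lambda>w. ennreal (norm (f w))"]) measurable
  then show ?thesis using assms unfolding integrable_iff_bounded by simp
qed

definition F :: "real^'n^'n \<Rightarrow> (real^'n) set \<Rightarrow> (real^'n) pexp \<Rightarrow> real^'n \<Rightarrow> real" where
  "F N A p y = (\<integral>w. indicator A w * hf N p (w - y) \<partial>lborel)"

lemma hf_dom_int:
  fixes N :: "real^'n^'n"
  assumes dN: "det N \<noteq> 0" and r: "0 \<le> r"
  shows "\<exists>C k. 0 < k \<and> (\<forall>v0 v. norm (v - v0) \<le> r \<longrightarrow> \<bar>hf N p v\<bar> \<le> C * exp (- k * (norm v0)\<^sup>2))
     \<and> (\<forall>a::real^'n. integrable lborel (\<lambda>w. C * exp (- k * (norm (w - a))\<^sup>2)))"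
proof -
  obtain C k where Ck: "0 < k" "\<forall>v0 v. norm (v - v0) \<le> r \<longrightarrow> \<bar>hf N p v\<bar> \<le> C * exp (- k * (norm v0)\<^sup>2)"
    using hf_dom[OF dN r] by blast
  have "integrable lborel (\<lambda>w. C * exp (- k * (norm (w - a))\<^sup>2))" for a :: "real^'n"
    using integrable_translate[OF gauss_int[OF Ck(1)], of "- a"] by simp
  then show ?thesis using Ck by blast
qed

lemma F_integrable:
  fixes N :: "real^'n^'n"
  assumes dN: "det N \<noteq> 0" and A[measurable]: "A \<in> sets borel"
  shows "integrable lborel (\<lambda>w. indicator A w * hf N p (w - y))"
proof -
  obtain C k where Ck: "0 < k" "\<forall>v0 v. norm (v - v0) \<le> 0 \<longrightarrow> \<bar>hf N p v\<bar> \<le> C * exp (- k * (norm v0)\<^sup>2)"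
    "\<forall>a::real^'n. integrable lborel (\<lambda>w. C * exp (- k * (norm (w - a))\<^sup>2))"
    using hf_dom_int[OF dN order_refl] by blast
  show ?thesis
  proof (rule Bochner_Integration.integrable_bound[OF Ck(3)[rule_format, of y]])
    show "AE w in lborel. norm (indicator A w * hf N p (w - y)) \<le> norm (C * exp (- k * (norm (w - y))\<^sup>2))"
    proof (rule AE_I2)
      fix w
      have "\<bar>hf N p (w - y)\<bar> \<le> C * exp (- k * (norm (w - y))\<^sup>2)" using Ck(2) by simp
      then show "norm (indicator A w * hf N p (w - y)) \<le> norm (C * exp (- k * (norm (w - y))\<^sup>2))"
        by (auto simp: indicator_def)
    qed
  qed measurable
qed

lemma F_deriv:
  fixes N :: "real^'n^'n"
  assumes dN: "det N \<noteq> 0" and A[measurable]: "A \<in> sets borel"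
  shows "((\<lambda>t. F N A p (y + t *\<^sub>R e)) has_real_derivative F N A (hdv N (- e) p) (y + t0 *\<^sub>R e)) (at t0)"
proof -
  obtain C k where Ck: "0 < k" "\<forall>v0 v. norm (v - v0) \<le> norm e \<longrightarrow> \<bar>hf N (hdv N (- e) p) v\<bar> \<le> C * exp (- k * (norm v0)\<^sup>2)"
    "\<forall>a::real^'n. integrable lborel (\<lambda>w. C * exp (- k * (norm (w - a))\<^sup>2))"
    using hf_dom_int[OF dN norm_ge_zero] by blast
  show ?thesis unfolding F_def
  proof (rule DU[where \<delta>=1 and g="\<lambda>w. C * exp (- k * (norm (w - (y + t0 *\<^sub>R e)))\<^sup>2)"])
    show "integrable lborel (\<lambda>w. indicator A w * hf N p (w - (y + t0 *\<^sub>R e)))"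
      by (rule F_integrable[OF dN A])
    show "integrable lborel (\<lambda>w. C * exp (- k * (norm (w - (y + t0 *\<^sub>R e)))\<^sup>2))"
      using Ck(3) by blast
    fix w :: "real^'n" and t :: real assume t: "\<bar>t - t0\<bar> < 1"
    have "((\<lambda>s. hf N p ((w - y) + s *\<^sub>R (- e))) has_real_derivative hf N (hdv N (- e) p) ((w - y) + t *\<^sub>R (- e))) (at t)"
      by (rule hf_deriv)
    then have "((\<lambda>s. indicator A w * hf N p ((w - y) + s *\<^sub>R (- e))) has_real_derivative
        indicator A w * hf N (hdv N (- e) p) ((w - y) + t *\<^sub>R (- e))) (at t)"
      by (rule DERIV_cmult)
    moreover have e1: "\<And>s. (w - y) + s *\<^sub>R (- e) = w - (y + s *\<^sub>R e)" by (simp add: algebra_simps)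
    ultimately show "((\<lambda>s. indicator A w * hf N p (w - (y + s *\<^sub>R e))) has_real_derivative
        indicator A w * hf N (hdv N (- e) p) (w - (y + t *\<^sub>R e))) (at t)" by (simp only: e1)
    have "norm ((w - (y + t *\<^sub>R e)) - (w - (y + t0 *\<^sub>R e))) \<le> norm e"
    proof -
      have "(w - (y + t *\<^sub>R e)) - (w - (y + t0 *\<^sub>R e)) = (t0 - t) *\<^sub>R e" by (simp add: algebra_simps)
      then show ?thesis using t by (simp add: mult_left_le_one_le abs_minus_commute)
    qed
    then have "\<bar>hf N (hdv N (- e) p) (w - (y + t *\<^sub>R e))\<bar> \<le> C * exp (- k * (norm (w - (y + t0 *\<^sub>R e)))\<^sup>2)"
      using Ck(2) by blast
    then show "\<bar>indicator A w * hf N (hdv N (- e) p) (w - (y + t *\<^sub>R e))\<bar> \<le> C * exp (- k * (norm (w - (y + t0 *\<^sub>R e)))\<^sup>2)"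
      by (auto simp: indicator_def)
  next
    show "(0::real) < 1" by simp
  next
    fix t show "(\<lambda>w. indicator A w * hf N p (w - (y + t *\<^sub>R e))) \<in> borel_measurable lborel" by measurable
  next
    show "(\<lambda>w. indicator A w * hf N (hdv N (- e) p) (w - (y + t0 *\<^sub>R e))) \<in> borel_measurable lborel" by measurable
  qed
qed

lemma F_pderiv:
  fixes N :: "real^'n^'n"
  assumes dN: "det N \<noteq> 0" and A[measurable]: "A \<in> sets borel"
  shows "pderiv_coord i (F N A p) = F N A (hdv N (- axis i 1) p)"
proof
  fix x
  have "((\<lambda>t. F N A p (x + t *\<^sub>R axis i 1)) has_real_derivative F N A (hdv N (- axis i 1) p) (x + 0 *\<^sub>R axis i 1)) (at 0)"
    by (rule F_deriv[OF dN A])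
  then show "pderiv_coord i (F N A p) x = F N A (hdv N (- axis i 1) p) x"
    unfolding pderiv_coord_def by (simp add: DERIV_imp_deriv)
qed

lemma F_meas[measurable]:
  fixes N :: "real^'n^'n"
  assumes A[measurable]: "A \<in> sets borel"
  shows "F N A p \<in> borel_measurable borel"
  unfolding F_def by measurable

lemma F_bound:
  fixes N :: "real^'n^'n"
  assumes dN: "det N \<noteq> 0" and A[measurable]: "A \<in> sets borel"
  shows "\<exists>B. \<forall>y. \<bar>F N A p y\<bar> \<le> B"
proof -
  obtain C k where Ck: "0 < k" "\<forall>v0 v. norm (v - v0) \<le> 0 \<longrightarrow> \<bar>hf N p v\<bar> \<le> C * exp (- k * (norm v0)\<^sup>2)"
    "\<forall>a::real^'n. integrable lborel (\<lambda>w. C * exp (- k * (norm (w - a))\<^sup>2))"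
    using hf_dom_int[OF dN order_refl] by blast
  have "\<bar>F N A p y\<bar> \<le> (\<integral>w. C * exp (- k * (norm (w::real^'n))\<^sup>2) \<partial>lborel)" for y
  proof -
    have "\<bar>F N A p y\<bar> \<le> (\<integral>w. C * exp (- k * (norm (w - y))\<^sup>2) \<partial>lborel)"
      unfolding F_def
    proof (rule order_trans[OF integral_abs_bound], rule integral_mono)
      show "integrable lborel (\<lambda>w. \<bar>indicator A w * hf N p (w - y)\<bar>)"
        using F_integrable[OF dN A] by (rule integrable_abs)
      show "integrable lborel (\<lambda>w. C * exp (- k * (norm (w - y))\<^sup>2))" using Ck(3) by blast
      fix w
      have "\<bar>hf N p (w - y)\<bar> \<le> C * exp (- k * (norm (w - y))\<^sup>2)" using Ck(2) by simp
      then show "\<bar>indicator A w * hf N p (w - y)\<bar> \<le> C * exp (- k * (norm (w - y))\<^sup>2)"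
        by (auto simp: indicator_def)
    qed
    also have "(\<integral>w. C * exp (- k * (norm (w - y))\<^sup>2) \<partial>lborel) = (\<integral>w. C * exp (- k * (norm (w::real^'n))\<^sup>2) \<partial>lborel)"
    proof -
      have "\<bar>hf N p 0\<bar> \<le> C" using Ck(2)[rule_format, of 0 0] by simp
      then have C0: "0 \<le> C" by (meson abs_ge_zero order_trans)
      have nn: "\<And>w. 0 \<le> C * exp (- k * (norm (w::real^'n))\<^sup>2)" using C0 by simp
      have i0: "integrable lborel (\<lambda>w::real^'n. C * exp (- k * (norm (w::real^'n))\<^sup>2))" using Ck(3)[rule_format, of 0] by simp
      have "(\<integral>\<^sup>+w. ennreal (C * exp (- k * (norm (w + - y))\<^sup>2)) \<partial>lborel) = (\<integral>\<^sup>+w. ennreal (C * exp (- k * (norm (w::real^'n))\<^sup>2)) \<partial>lborel)"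
        by (rule nn_integral_translate[where f="\<lambda>w::real^'n. ennreal (C * exp (- k * (norm w)\<^sup>2))"]) measurable
      then have "ennreal (\<integral>w. C * exp (- k * (norm (w - y))\<^sup>2) \<partial>lborel) = ennreal (\<integral>w. C * exp (- k * (norm (w::real^'n))\<^sup>2) \<partial>lborel)"
        using nn_integral_eq_integral[OF Ck(3)[rule_format, of y]] nn_integral_eq_integral[OF i0] nn by simp
      moreover have "0 \<le> (\<integral>w. C * exp (- k * (norm (w - y))\<^sup>2) \<partial>lborel)"
        by (rule Bochner_Integration.integral_nonneg) (rule nn)
      moreover have "0 \<le> (\<integral>w. C * exp (- k * (norm (w::real^'n))\<^sup>2) \<partial>lborel)"
        by (rule Bochner_Integration.integral_nonneg) (rule nn)
      ultimately show ?thesis by simp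
    qed
    finally show ?thesis .
  qed
  then show ?thesis by blast
qed

lemma hyperrect_borel:
  fixes A :: "(real^'n) set"
  assumes "A \<in> hyperrects"
  shows "A \<in> sets borel"
proof -
  obtain a b :: "'n \<Rightarrow> ereal" where A: "A = {x. \<forall>j. a j < ereal (x $ j) \<and> ereal (x $ j) \<le> b j}"
    using assms by (auto simp: hyperrects_def)
  have "{x::real^'n. \<forall>j. a j < ereal (x $ j) \<and> ereal (x $ j) \<le> b j} \<in> sets borel"
    by measurable
  then show ?thesis using A by simp
qed

definition cS :: "real^'n^'n \<Rightarrow> real" where
  "cS S = (2 * pi) powr (- real CARD('n) / 2) / \<bar>det S\<bar>"

lemma phi_F:
  fixes S :: "real^'n^'n" and A :: "(real^'n) set"
  assumes dS: "det S \<noteq> 0" and A[measurable]: "A \<in> sets borel"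
  shows "phi A y S = cS S * F (matrix_inv S) A (PC 1) y"
proof -
  let ?N = "matrix_inv S"
  let ?c0 = "(2 * pi) powr (- real CARD('n) / 2)"
  have gd: "gdens (?N *v v) = ?c0 * hf ?N (PC 1) v" for v
    by (simp add: gdens_def hf_def gE_def)
  have "ennreal \<bar>det S\<bar> * Phi A y S = (\<integral>\<^sup>+u. ennreal (gdens (?N *v u)) * indicator A (y + u) \<partial>lborel)"
    by (rule Phi_dens[OF A dS, symmetric])
  also have "\<dots> = (\<integral>\<^sup>+w. (\<lambda>u. ennreal (gdens (?N *v u)) * indicator A (y + u)) (w + - y) \<partial>lborel)"
    by (rule nn_integral_translate[symmetric]) measurable
  also have "\<dots> = (\<integral>\<^sup>+w. ennreal (?c0 * (indicator A w * hf ?N (PC 1) (w - y))) \<partial>lborel)"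
    by (intro nn_integral_cong) (simp add: gd indicator_def)
  also have "\<dots> = ennreal (\<integral>w. ?c0 * (indicator A w * hf ?N (PC 1) (w - y)) \<partial>lborel)"
  proof (rule nn_integral_eq_integral)
    show "integrable lborel (\<lambda>w. ?c0 * (indicator A w * hf ?N (PC 1) (w - y)))"
      using F_integrable[of ?N A "PC 1" y] dS A by (simp add: inv_det_ne0)
    show "AE w in lborel. 0 \<le> ?c0 * (indicator A w * hf ?N (PC 1) (w - y))"
      by (intro AE_I2) (simp add: hf_def gE_def indicator_def)
  qed
  also have "\<dots> = ennreal (?c0 * F ?N A (PC 1) y)"
    by (simp add: F_def)
  finally have e: "ennreal \<bar>det S\<bar> * Phi A y S = ennreal (?c0 * F ?N A (PC 1) y)" .
  have "Phi A y S = ennreal (1 / \<bar>det S\<bar>) * ennreal (?c0 * F ?N A (PC 1) y)"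
    using dS by (intro ennreal_div_cancel[OF _ e[symmetric]]) simp
  also have "\<dots> = ennreal (cS S * F ?N A (PC 1) y)"
  proof -
    have "0 \<le> F ?N A (PC 1) y" unfolding F_def
      by (rule Bochner_Integration.integral_nonneg) (simp add: hf_def gE_def indicator_def)
    then show ?thesis by (simp add: ennreal_mult[symmetric] cS_def)
  qed
  finally have "Phi A y S = ennreal (cS S * F ?N A (PC 1) y)" .
  moreover have "0 \<le> cS S * F ?N A (PC 1) y"
  proof -
    have "0 \<le> F ?N A (PC 1) y" unfolding F_def
      by (rule Bochner_Integration.integral_nonneg) (simp add: hf_def gE_def indicator_def)
    then show ?thesis by (simp add: cS_def)
  qed
  ultimately show ?thesis by (simp add: phi_Phi[OF A])
qed

lemma cF_pderiv:
  fixes N :: "real^'n^'n"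
  assumes dN: "det N \<noteq> 0" and A[measurable]: "A \<in> sets borel"
  shows "pderiv_coord i (\<lambda>y. c * F N A p y) = (\<lambda>y. c * F N A (hdv N (- axis i 1) p) y)"
proof
  fix x
  have "((\<lambda>t. c * F N A p (x + t *\<^sub>R axis i 1)) has_real_derivative c * F N A (hdv N (- axis i 1) p) (x + 0 *\<^sub>R axis i 1)) (at 0)"
    by (rule DERIV_cmult[OF F_deriv[OF dN A]])
  then show "pderiv_coord i (\<lambda>y. c * F N A p y) x = c * F N A (hdv N (- axis i 1) p) x"
    unfolding pderiv_coord_def by (simp add: DERIV_imp_deriv)
qed

definition TT :: "real^'n^'n \<Rightarrow> (real^'n) set \<Rightarrow> real \<Rightarrow> real^'n^'n \<Rightarrow> (real^'n) pexp \<Rightarrow> real^'n \<Rightarrow> real" where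
  "TT N A c R p y = (\<integral>\<xi>. c * F N A p (y + R *v \<xi>) \<partial>std_gauss)"

lemma TT_pderiv:
  fixes N :: "real^'n^'n"
  assumes dN: "det N \<noteq> 0" and A[measurable]: "A \<in> sets borel"
  shows "pderiv_coord i (TT N A c R p) = TT N A c R (hdv N (- axis i 1) p)"
proof
  fix x
  interpret prob_space "std_gauss :: (real^'n) measure" by (rule prob_space_std_gauss)
  let ?e = "axis i 1 :: real^'n"
  let ?q = "hdv N (- ?e) p"
  obtain B where B: "\<And>y. \<bar>F N A ?q y\<bar> \<le> B" using F_bound[OF dN A] by blast
  obtain B0 where B0: "\<And>y. \<bar>F N A p y\<bar> \<le> B0" using F_bound[OF dN A] by blast
  have "((\<lambda>t. \<integral>\<xi>. c * F N A p (x + t *\<^sub>R ?e + R *v \<xi>) \<partial>std_gauss) has_real_derivative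
      (\<integral>\<xi>. c * F N A ?q (x + 0 *\<^sub>R ?e + R *v \<xi>) \<partial>std_gauss)) (at 0)"
  proof (rule DU[where \<delta>=1 and g="\<lambda>_. \<bar>c\<bar> * B"])
    show "integrable std_gauss (\<lambda>\<xi>. c * F N A p (x + 0 *\<^sub>R ?e + R *v \<xi>))"
    proof (rule integrable_const_bound[where B="\<bar>c\<bar> * B0"])
      show "AE \<xi> in std_gauss. norm (c * F N A p (x + 0 *\<^sub>R ?e + R *v \<xi>)) \<le> \<bar>c\<bar> * B0"
        by (intro AE_I2) (simp add: abs_mult mult_left_mono B0)
    qed simp
    show "integrable (std_gauss :: (real^'n) measure) (\<lambda>_. \<bar>c\<bar> * B)"
    proof -
      have "0 \<le> B" using B[of 0] by (meson abs_ge_zero order_trans)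
      then show ?thesis by (intro integrable_const_bound[where B="\<bar>c\<bar> * B"]) auto
    qed
    fix \<xi> :: "real^'n" and t :: real
    have "((\<lambda>s. c * F N A p ((x + R *v \<xi>) + s *\<^sub>R ?e)) has_real_derivative c * F N A ?q ((x + R *v \<xi>) + t *\<^sub>R ?e)) (at t)"
      by (rule DERIV_cmult[OF F_deriv[OF dN A]])
    moreover have e1: "\<And>s. (x + R *v \<xi>) + s *\<^sub>R ?e = x + s *\<^sub>R ?e + R *v \<xi>" by (simp add: algebra_simps)
    ultimately show "((\<lambda>s. c * F N A p (x + s *\<^sub>R ?e + R *v \<xi>)) has_real_derivative c * F N A ?q (x + t *\<^sub>R ?e + R *v \<xi>)) (at t)"
      by (simp only: e1)
    show "\<bar>c * F N A ?q (x + t *\<^sub>R ?e + R *v \<xi>)\<bar> \<le> \<bar>c\<bar> * B"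
      by (simp add: abs_mult mult_left_mono B)
  next
    show "(0::real) < 1" by simp
  next
    fix t show "(\<lambda>\<xi>. c * F N A p (x + t *\<^sub>R ?e + R *v \<xi>)) \<in> borel_measurable std_gauss" by measurable
  next
    show "(\<lambda>\<xi>. c * F N A ?q (x + 0 *\<^sub>R ?e + R *v \<xi>)) \<in> borel_measurable std_gauss" by measurable
  qed
  then show "pderiv_coord i (TT N A c R p) x = TT N A c R ?q x"
    unfolding pderiv_coord_def TT_def by (simp add: DERIV_imp_deriv)
qed

lemma ereal_int_le_sup:
  fixes f :: "'b \<Rightarrow> real" and g :: "'a \<Rightarrow> 'b"
  assumes P: "prob_space M" and int: "integrable M (\<lambda>\<xi>. f (g \<xi>))"
  shows "ereal (\<integral>\<xi>. f (g \<xi>) \<partial>M) \<le> (SUP y. ereal (f y))"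
proof (cases "(SUP y. ereal (f y)) = \<infinity>")
  case True then show ?thesis by simp
next
  case False
  have le: "ereal (f y) \<le> (SUP y. ereal (f y))" for y by (rule SUP_upper) simp
  then have "(SUP y. ereal (f y)) \<noteq> - \<infinity>" by (metis MInfty_neq_ereal(1) ereal_infty_less_eq(2))
  with False obtain m where m: "(SUP y. ereal (f y)) = ereal m" by (cases "SUP y. ereal (f y)") auto
  have fm: "f y \<le> m" for y using le[of y] m by simp
  interpret prob_space M by (rule P)
  have "(\<integral>\<xi>. f (g \<xi>) \<partial>M) \<le> (\<integral>\<xi>. m \<partial>M)"
    by (rule integral_mono[OF int]) (simp_all add: fm)
  also have "\<dots> = m" by (simp add: prob_space.prob_space[OF P])
  finally show ?thesis using m by simp
qed

theorem lemmaC7: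
  fixes A :: "(real ^ 'n) set" and \<Gamma>1 \<Gamma>2 :: "real ^ 'n ^ 'n" and x :: "real ^ 'n"
  assumes "A \<in> hyperrects"
    and "sym_mat \<Gamma>1" and "sym_mat \<Gamma>2"
    and "loewner_ge \<Gamma>1 \<Gamma>2" and "pd_mat \<Gamma>2"
  shows "ereal (third_deriv_sum A (psd_sqrt \<Gamma>1) x)
           \<le> (SUP y. ereal (third_deriv_sum A (psd_sqrt \<Gamma>2) y))"
proof -
  note sym1 = assms(2) and pd2 = assms(5)
  have A[measurable]: "A \<in> sets borel" by (rule hyperrect_borel[OF assms(1)])
  define D where "D = \<Gamma>1 - \<Gamma>2"
  have psdD: "psd_mat D" using assms(4) by (simp add: loewner_ge_def D_def)
  have G1: "\<Gamma>1 = D + \<Gamma>2" by (simp add: D_def)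
  have pd1: "pd_mat \<Gamma>1"
    unfolding pd_mat_def
  proof (intro conjI allI impI)
    show "sym_mat \<Gamma>1" by (rule sym1)
    fix v :: "real^'n" assume v: "v \<noteq> 0"
    have "0 \<le> v \<bullet> (D *v v)" using psdD by (simp add: psd_mat_def)
    moreover have "0 < v \<bullet> (\<Gamma>2 *v v)" using pd2 v by (simp add: pd_mat_def)
    ultimately show "0 < v \<bullet> (\<Gamma>1 *v v)"
      by (simp add: G1 matrix_vector_mult_add_rdistrib inner_add_right)
  qed
  define S1 where "S1 = psd_sqrt \<Gamma>1"
  define S2 where "S2 = psd_sqrt \<Gamma>2"
  define R where "R = psd_sqrt D"
  have S1: "psd_mat S1" "S1 ** S1 = \<Gamma>1" "det S1 \<noteq> 0"
    using psd_sqrt_props[OF pd_imp_psd[OF pd1]] pd_sqrt_det[OF pd1] by (simp_all add: S1_def)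
  have S2: "psd_mat S2" "S2 ** S2 = \<Gamma>2" "det S2 \<noteq> 0"
    using psd_sqrt_props[OF pd_imp_psd[OF pd2]] pd_sqrt_det[OF pd2] by (simp_all add: S2_def)
  have RR: "psd_mat R" "R ** R = D"
    using psd_sqrt_props[OF psdD] by (simp_all add: R_def)
  have sS1: "sym_mat S1" and sS2: "sym_mat S2" and sR: "sym_mat R"
    using S1 S2 RR by (simp_all add: psd_mat_def)
  have eq: "S1 ** S1 = S2 ** S2 + R ** R" using S1 S2 RR G1 by (simp add: add.commute)
  define N where "N = matrix_inv S2"
  define c where "c = cS S2"
  have dN: "det N \<noteq> 0" using S2(3) by (simp add: N_def inv_det_ne0)
  have Phi2: "(\<lambda>y. phi A y S2) = (\<lambda>y. c * F N A (PC 1) y)"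
    using phi_F[OF S2(3) A] by (simp add: N_def c_def)
  have Phi1: "(\<lambda>y. phi A y S1) = TT N A c R (PC 1)"
  proof
    fix y
    have "phi A y S1 = (\<integral>\<xi>. phi A (y + R *v \<xi>) S2 \<partial>std_gauss)"
      by (rule law_identity[OF sS1 sS2 sR S1(3) S2(3) eq A])
    also have "\<dots> = TT N A c R (PC 1) y"
      unfolding TT_def using Phi2 by (metis (no_types))
    finally show "phi A y S1 = TT N A c R (PC 1) y" .
  qed
  define Q where "Q k i j = hdv N (- axis k 1) (hdv N (- axis i 1) (hdv N (- axis j 1) (PC 1)))" for k i j :: 'n
  have d1: "pderiv_coord k (pderiv_coord i (pderiv_coord j (\<lambda>y. phi A y S1))) = TT N A c R (Q k i j)" for k i j
    by (simp add: Phi1 TT_pderiv[OF dN A] Q_def)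
  have d2: "pderiv_coord k (pderiv_coord i (pderiv_coord j (\<lambda>y. phi A y S2))) = (\<lambda>y. c * F N A (Q k i j) y)" for k i j
    by (simp add: Phi2 cF_pderiv[OF dN A] Q_def)
  have T2: "third_deriv_sum A S2 y = (\<Sum>k\<in>UNIV. \<Sum>i\<in>UNIV. \<Sum>j\<in>UNIV. \<bar>c * F N A (Q k i j) y\<bar>)" for y
    unfolding third_deriv_sum_def d2 ..
  have T1: "third_deriv_sum A S1 x = (\<Sum>k\<in>UNIV. \<Sum>i\<in>UNIV. \<Sum>j\<in>UNIV. \<bar>TT N A c R (Q k i j) x\<bar>)"
    unfolding third_deriv_sum_def d1 ..
  interpret prob_space "std_gauss :: (real^'n) measure" by (rule prob_space_std_gauss)
  have hint: "integrable std_gauss (\<lambda>\<xi>. \<bar>c * F N A (Q k i j) (x + R *v \<xi>)\<bar>)" for k i j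
  proof -
    obtain B where B: "\<And>y. \<bar>F N A (Q k i j) y\<bar> \<le> B" using F_bound[OF dN A] by blast
    show ?thesis
    proof (rule integrable_const_bound[where B="\<bar>c\<bar> * B"])
      show "AE \<xi> in std_gauss. norm \<bar>c * F N A (Q k i j) (x + R *v \<xi>)\<bar> \<le> \<bar>c\<bar> * B"
        by (intro AE_I2) (simp add: abs_mult mult_left_mono B)
    qed simp
  qed
  have "third_deriv_sum A S1 x \<le> (\<Sum>k\<in>UNIV. \<Sum>i\<in>UNIV. \<Sum>j\<in>UNIV. \<integral>\<xi>. \<bar>c * F N A (Q k i j) (x + R *v \<xi>)\<bar> \<partial>std_gauss)"
    unfolding T1 TT_def by (intro sum_mono integral_abs_bound)
  also have "\<dots> = (\<integral>\<xi>. third_deriv_sum A S2 (x + R *v \<xi>) \<partial>std_gauss)"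
    unfolding T2 using hint by (simp add: Bochner_Integration.integral_sum Bochner_Integration.integrable_sum)
  finally have le: "third_deriv_sum A S1 x \<le> (\<integral>\<xi>. third_deriv_sum A S2 (x + R *v \<xi>) \<partial>std_gauss)" .
  have int2: "integrable std_gauss (\<lambda>\<xi>. third_deriv_sum A S2 (x + R *v \<xi>))"
    unfolding T2 using hint by (simp add: Bochner_Integration.integrable_sum)
  have "ereal (third_deriv_sum A S1 x) \<le> ereal (\<integral>\<xi>. third_deriv_sum A S2 (x + R *v \<xi>) \<partial>std_gauss)"
    using le by simp
  also have "\<dots> \<le> (SUP y. ereal (third_deriv_sum A S2 y))"
    by (rule ereal_int_le_sup[where f="third_deriv_sum A S2" and g="\<lambda>\<xi>. x + R *v \<xi>", OF prob_space_std_gauss int2])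
  finally show ?thesis by (simp add: S1_def S2_def)
qed

end
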